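(* For all $(n,i),(m,j)\in S$ we have $v_{n,i}(x-s_{m,j})=\min\{\delta(n,i),\delta(m,j)\}$. In particular, $v_{n,i}<v_s$ for all $(n,i)\in S$.
   Context: $p$ is a prime, $\mathbb F$ an algebraic closure of $\mathbb F_p$, $t$ an indeterminate, $H=\mathbb F((t^{\mathbb Q}))$ the Hahn field of series $\sum_{q\in\mathbb Q}a_qt^q$ ($a_q\in\mathbb F$) with well-ordered support, $K=\bigcup_{N\ge1}\mathbb F((t^{1/N}))\subset H$, and $v(\sigma)=\min\operatorname{supp}(\sigma)$ on $H$. Fix the algebraic closure $\overline K\subset H$ of $K$. For $m\ge0$, $s_m=\sum_{j\ge m}\binom{j}{m}t^{-1/p^{j+1}}$ (binomials in $\mathbb F_p$), and $s=\sum_{m\ge0}t^ms_m$. Let $S=\{(n,i)\in\mathbb Z^2: 0\le n\le i,\ p\nmid\binom in\}$ with the lexicographic order, $\delta(n,i)=n-1/p^{i+1}$, and $s_{n,i}=\sum_{m=0}^{n-1}t^ms_m+t^n\sum_{j=n}^{i-1}\binom jn t^{-1/p^{j+1}}\in\overline K$ (the truncation of $s$ consisting of its terms with exponent $<\delta(n,i)$). $v_s$ is the valuation on $\overline K[x]$ given by $v_s(g)=v(g(s))$, and $v_{n,i}$ is the depth-zero valuation on $\overline K[x]$ defined by $v_{n,i}(\sum_\ell a_\ell(x-s_{n,i})^\ell)=\min_\ell\{v(a_\ell)+\ell\,\delta(n,i)\}$. For valuations, $\mu\le\nu$ means $\mu(f)\le\nu(f)$ for all $f$, and $\mu<\nu$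 means $\mu\le\nu$ and $\mu\ne\nu$. *)

theory Defs
  imports Complex_Main "HOL-Computational_Algebra.Polynomial" "HOL-Library.Extended_Real"
begin

type_synonym 'f hser = "rat \<Rightarrow> 'f"

definition hsupp :: "'f::zero hser \<Rightarrow> rat set" where
  "hsupp a = {q. a q \<noteq> 0}"

definition well_ordered_set :: "rat set \<Rightarrow> bool" where
  "well_ordered_set A \<longleftrightarrow> (\<forall>B\<subseteq>A. B \<noteq> {} \<longrightarrow> (\<exists>m\<in>B. \<forall>x\<in>B. m \<le> x))"

definition hahn :: "'f::zero hser set" where
  "hahn = {a. well_ordered_set (hsupp a)}"

definition hzero :: "'f::zero hser" where "hzero = (\<lambda>_. 0)"
definition hone :: "'f::{zero,one} hser" where "hone = (\<lambda>q. if q = 0 then 1 else 0)"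
definition hadd :: "'f::plus hser \<Rightarrow> 'f hser \<Rightarrow> 'f hser" where "hadd a b = (\<lambda>q. a q + b q)"
definition hneg :: "'f::uminus hser \<Rightarrow> 'f hser" where "hneg a = (\<lambda>q. - a q)"

definition hmono :: "'f::zero \<Rightarrow> rat \<Rightarrow> 'f hser" where
  "hmono c e = (\<lambda>q. if q = e then c else 0)"

text \<open>Cauchy product (the index set is finite for series with well-ordered support).\<close>
definition hmul :: "'f::comm_ring_1 hser \<Rightarrow> 'f hser \<Rightarrow> 'f hser" where
  "hmul a b = (\<lambda>q. \<Sum>u\<in>{u. a u \<noteq> 0 \<and> b (q - u) \<noteq> 0}. a u * b (q - u))"

definition hpow :: "'f::comm_ring_1 hser \<Rightarrow> nat \<Rightarrow> 'f hser" where
  "hpow a n = ((hmul a) ^^ n) hone"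

definition hsum :: "('i \<Rightarrow> 'f::comm_monoid_add hser) \<Rightarrow> 'i set \<Rightarrow> 'f hser" where
  "hsum F I = (\<lambda>q. \<Sum>i\<in>{i\<in>I. F i q \<noteq> 0}. F i q)"

definition hval :: "'f::zero hser \<Rightarrow> ereal" where
  "hval a = (if a = hzero then \<infinity> else ereal (real_of_rat (LEAST q. a q \<noteq> 0)))"

definition K_set :: "'f::zero hser set" where
  "K_set = {a \<in> hahn. \<exists>N::nat. N \<ge> 1 \<and> (\<forall>q. a q \<noteq> 0 \<longrightarrow> (\<exists>k::int. q = of_int k / of_nat N))}"

text \<open>Polynomials over H as coefficient lists (lowest degree first); Horner evaluation.\<close>
definition heval :: "'f::comm_ring_1 hser list \<Rightarrow> 'f hser \<Rightarrow> 'f hser" where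
  "heval cs x = foldr (\<lambda>c acc. hadd c (hmul x acc)) cs hzero"

definition barK :: "'f::comm_ring_1 hser set" where
  "barK = {a \<in> hahn. \<exists>cs. set cs \<subseteq> K_set \<and> (\<exists>c\<in>set cs. c \<noteq> hzero) \<and> heval cs a = hzero}"

definition barK_polys :: "'f::comm_ring_1 hser list set" where
  "barK_polys = {cs. set cs \<subseteq> barK}"

definition s_m :: "nat \<Rightarrow> nat \<Rightarrow> 'f::comm_ring_1 hser" where
  "s_m p m = hsum (\<lambda>j. hmono (of_nat (j choose m)) (- 1 / of_nat p ^ (j + 1))) {m..}"

definition s_ser :: "nat \<Rightarrow> 'f::comm_ring_1 hser" where
  "s_ser p = hsum (\<lambda>m. hmul (hmono 1 (of_nat m)) (s_m p m)) UNIV"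

definition S_set :: "nat \<Rightarrow> (nat \<times> nat) set" where
  "S_set p = {(n, i). n \<le> i \<and> \<not> p dvd (i choose n)}"

definition delta :: "nat \<Rightarrow> nat \<Rightarrow> nat \<Rightarrow> rat" where
  "delta p n i = of_nat n - 1 / of_nat p ^ (i + 1)"

definition s_trunc :: "nat \<Rightarrow> nat \<Rightarrow> nat \<Rightarrow> 'f::comm_ring_1 hser" where
  "s_trunc p n i =
     hadd (hsum (\<lambda>m. hmul (hmono 1 (of_nat m)) (s_m p m)) {..<n})
          (hmul (hmono 1 (of_nat n))
                (hsum (\<lambda>j. hmono (of_nat (j choose n)) (- 1 / of_nat p ^ (j + 1))) {n..<i}))"

text \<open>l-th coefficient of the expansion of sum_k cs!k x^k in powers of (x - c).\<close>
definition taylor_coeff :: "'f::comm_ring_1 hser list \<Rightarrow> 'f hser \<Rightarrow> nat \<Rightarrow> 'f hser" where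
  "taylor_coeff cs c l =
     hsum (\<lambda>k. hmul (\<lambda>q. of_nat (k choose l) * (cs ! k) q) (hpow c (k - l))) {l..<length cs}"

text \<open>Depth-zero valuation with centre c and radius d.\<close>
definition vdepth0 :: "'f::comm_ring_1 hser \<Rightarrow> rat \<Rightarrow> 'f hser list \<Rightarrow> ereal" where
  "vdepth0 c d cs =
     (INF l\<in>{..<length cs}. hval (taylor_coeff cs c l) + ereal (real_of_rat (of_nat l * d)))"

definition v_ni :: "nat \<Rightarrow> nat \<Rightarrow> nat \<Rightarrow> 'f::comm_ring_1 hser list \<Rightarrow> ereal" where
  "v_ni p n i = vdepth0 (s_trunc p n i) (delta p n i)"

definition v_s :: "nat \<Rightarrow> 'f::comm_ring_1 hser list \<Rightarrow> ereal" where
  "v_s p cs = hval (heval cs (s_ser p))"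

definition val_le :: "('f::comm_ring_1 hser list \<Rightarrow> ereal) \<Rightarrow> ('f hser list \<Rightarrow> ereal) \<Rightarrow> bool" where
  "val_le \<mu> \<nu> \<longleftrightarrow> (\<forall>cs\<in>barK_polys. \<mu> cs \<le> \<nu> cs)"

definition val_less :: "('f::comm_ring_1 hser list \<Rightarrow> ereal) \<Rightarrow> ('f hser list \<Rightarrow> ereal) \<Rightarrow> bool" where
  "val_less \<mu> \<nu> \<longleftrightarrow> val_le \<mu> \<nu> \<and> (\<exists>cs\<in>barK_polys. \<mu> cs \<noteq> \<nu> cs)"

end

theory Submission
  imports Defs "HOL-Computational_Algebra.Primes"
begin

section \<open>Well-ordered sets of rationals\<close>

lemma wo_subset: "well_ordered_set A \<Longrightarrow> B \<subseteq> A \<Longrightarrow> well_ordered_set B"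
  unfolding well_ordered_set_def by (meson order_trans)

lemma wo_Un: "well_ordered_set A \<Longrightarrow> well_ordered_set B \<Longrightarrow> well_ordered_set (A \<union> B)"
  unfolding well_ordered_set_def
proof (intro allI impI)
  fix C assume a: "\<forall>B\<subseteq>A. B \<noteq> {} \<longrightarrow> (\<exists>m\<in>B. \<forall>x\<in>B. m \<le> x)"
    and b: "\<forall>Ba\<subseteq>B. Ba \<noteq> {} \<longrightarrow> (\<exists>m\<in>Ba. \<forall>x\<in>Ba. m \<le> x)"
    and C: "C \<subseteq> A \<union> B" "C \<noteq> {}"
  show "\<exists>m\<in>C. \<forall>x\<in>C. m \<le> x"
  proof (cases "C \<inter> A = {}")
    case True
    then show ?thesis using b[rule_format, of C] C by blast
  next
    case F1: False
    obtain m1 where m1: "m1 \<in> C \<inter> A" "\<forall>x\<in>C \<inter> A. m1 \<le> x" using a[rule_format, of "C \<inter> A"] F1 by blast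
    show ?thesis
    proof (cases "C \<inter> B = {}")
      case True
      then show ?thesis using m1 C by blast
    next
      case False
      obtain m2 where m2: "m2 \<in> C \<inter> B" "\<forall>x\<in>C \<inter> B. m2 \<le> x" using b[rule_format, of "C \<inter> B"] False by blast
      have "\<forall>x\<in>C. min m1 m2 \<le> x"
      proof
        fix x assume "x \<in> C"
        then have "x \<in> C \<inter> A \<or> x \<in> C \<inter> B" using C by blast
        then show "min m1 m2 \<le> x" using m1 m2 by (meson min.coboundedI1 min.coboundedI2)
      qed
      moreover have "min m1 m2 \<in> C" using m1 m2 by (simp add: min_def)
      ultimately show ?thesis by blast
    qed
  qed
qed

lemma wo_finite: "finite (A::rat set) \<Longrightarrow> well_ordered_set A"
  unfolding well_ordered_set_def
  by (metis Min_in Min_le finite_subset)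

lemma wo_no_desc:
  assumes "well_ordered_set A" "\<And>n. f n \<in> A" "\<And>n. f (Suc n) < f n"
  shows False
proof -
  have "range f \<subseteq> A" "range f \<noteq> {}" using assms(2) by auto
  then obtain m where "m \<in> range f" "\<forall>x\<in>range f. m \<le> x"
    using assms(1) unfolding well_ordered_set_def by meson
  then obtain k where "\<forall>x\<in>range f. f k \<le> x" by blast
  then have "f k \<le> f (Suc k)" by blast
  with assms(3)[of k] show False by simp
qed

lemma desc_less:
  fixes c :: "nat \<Rightarrow> rat"
  assumes "\<And>n. c (Suc n) < c n" "m < m'"
  shows "c m' < c m"
  using lift_Suc_mono_less[of "\<lambda>n. - c n" m m'] assms by auto

lemma wo_mono_subseq:
  fixes f :: "nat \<Rightarrow> rat"
  assumes wo: "well_ordered_set A" and fA: "\<And>n. f n \<in> A"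
  shows "\<exists>g::nat\<Rightarrow>nat. strict_mono g \<and> (\<forall>m n. m \<le> n \<longrightarrow> f (g m) \<le> f (g n))"
proof -
  obtain h :: "nat \<Rightarrow> nat" where h: "strict_mono h" "monoseq (\<lambda>n. f (h n))" using seq_monosub by blast
  show ?thesis
  proof (cases "\<forall>m. \<forall>n\<ge>m. f (h m) \<le> f (h n)")
    case True show ?thesis apply (rule exI[of _ h]) using True h(1) by auto
  next
    case False
    then have dec: "\<forall>m. \<forall>n\<ge>m. f (h n) \<le> f (h m)" using h(2) unfolding monoseq_def by blast
    have "range (\<lambda>n. f (h n)) \<subseteq> A" "range (\<lambda>n. f (h n)) \<noteq> {}" using fA by auto
    then obtain mm where mm: "mm \<in> range (\<lambda>n. f (h n))" "\<forall>x\<in>range (\<lambda>n. f (h n)). mm \<le> x"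
      using wo unfolding well_ordered_set_def by meson
    then obtain k where k: "\<forall>x\<in>range (\<lambda>n. f (h n)). f (h k) \<le> x" by auto
    have eq: "f (h n) = f (h k)" if "n \<ge> k" for n
      using dec k that by (meson antisym rangeI)
    show ?thesis
    proof (rule exI[of _ "\<lambda>n. h (n + k)"], intro conjI allI impI)
      show "strict_mono (\<lambda>n. h (n + k))" using h(1) by (simp add: strict_mono_def)
      fix m n :: nat assume "m \<le> n"
      show "f (h (m + k)) \<le> f (h (n + k))" using eq[of "m+k"] eq[of "n+k"] by simp
    qed
  qed
qed

lemma conv_finite:
  fixes A B :: "rat set"
  assumes "well_ordered_set A" "well_ordered_set B"
  shows "finite {u \<in> A. q - u \<in> B}"
proof (rule ccontr)
  assume "infinite {u \<in> A. q - u \<in> B}"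
  then obtain f :: "nat \<Rightarrow> rat" where f: "inj f" "range f \<subseteq> {u \<in> A. q - u \<in> B}"
    using infinite_countable_subset by blast
  then obtain g :: "nat \<Rightarrow> nat" where g: "strict_mono g" "\<forall>m n. m \<le> n \<longrightarrow> f (g m) \<le> f (g n)"
    using wo_mono_subseq[OF assms(1), of f] by blast
  have "f (g n) < f (g (Suc n))" for n
  proof -
    have "g n \<noteq> g (Suc n)" using g(1) by (metis lessI less_irrefl strict_mono_def)
    then have "f (g n) \<noteq> f (g (Suc n))" using f(1) by (simp add: inj_eq)
    then show ?thesis using g(2) by (meson le_SucI order_le_neq_trans order_refl)
  qed
  then show False
    using wo_no_desc[OF assms(2), of "\<lambda>n. q - f (g n)"] f(2) by auto
qed

lemma wo_not_desc:
  fixes C :: "rat set"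
  assumes "\<not> well_ordered_set C"
  shows "\<exists>f. (\<forall>n. f n \<in> C) \<and> (\<forall>n. f (Suc n) < f n)"
proof -
  obtain D where D: "D \<subseteq> C" "D \<noteq> {}" "\<forall>m\<in>D. \<exists>x\<in>D. x < m"
    using assms unfolding well_ordered_set_def by (meson not_le)
  obtain x0 where x0: "x0 \<in> D" using D by blast
  obtain nx where nx: "\<And>m. m \<in> D \<Longrightarrow> nx m \<in> D \<and> nx m < m" using D(3) by metis
  define f where "f n = (nx ^^ n) x0" for n
  have fD: "f n \<in> D" for n by (induction n) (auto simp: f_def x0 nx)
  have "f (Suc n) < f n" for n using nx[OF fD[of n]] by (simp add: f_def)
  then show ?thesis using fD D(1) by blast
qed

definition sumset :: "rat set \<Rightarrow> rat set \<Rightarrow> rat set" where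
  "sumset A B = {u + w | u w. u \<in> A \<and> w \<in> B}"

lemma wo_sumset:
  assumes wa: "well_ordered_set A" and wb: "well_ordered_set B"
  shows "well_ordered_set (sumset A B)"
proof (rule ccontr)
  assume "\<not> well_ordered_set (sumset A B)"
  then obtain c where c: "\<And>n. c n \<in> sumset A B" "\<And>n. c (Suc n) < c n"
    using wo_not_desc by blast
  have "\<forall>n. \<exists>ab. fst ab \<in> A \<and> snd ab \<in> B \<and> c n = fst ab + snd ab"
    using c(1) unfolding sumset_def by force
  then obtain ab where abp: "\<And>n. fst (ab n) \<in> A \<and> snd (ab n) \<in> B \<and> c n = fst (ab n) + snd (ab n)"
    by metis
  define a where "a n = fst (ab n)" for n
  define b where "b n = snd (ab n)" for n
  have ab: "\<And>n. a n \<in> A" "\<And>n. b n \<in> B" "\<And>n. c n = a n + b n"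
    using abp by (auto simp: a_def b_def)
  obtain g :: "nat \<Rightarrow> nat" where g: "strict_mono g" "\<forall>m n. m \<le> n \<longrightarrow> a (g m) \<le> a (g n)"
    using wo_mono_subseq[OF wa, of a] ab by blast
  have "b (g (Suc n)) < b (g n)" for n
  proof -
    have "c (g (Suc n)) < c (g n)" using desc_less[of c, OF c(2)] g(1) by (simp add: strict_mono_def)
    moreover have "a (g n) \<le> a (g (Suc n))" using g(2) by simp
    ultimately show ?thesis using ab(3)[of "g n"] ab(3)[of "g (Suc n)"] by linarith
  qed
  then show False using wo_no_desc[OF wb, of "\<lambda>n. b (g n)"] ab by auto
qed

section \<open>Basic facts on Hahn series\<close>

lemma hsupp_iff[simp]: "q \<in> hsupp a \<longleftrightarrow> a q \<noteq> 0" by (simp add: hsupp_def)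

lemma in_hahn: "a \<in> hahn \<longleftrightarrow> well_ordered_set (hsupp a)" by (simp add: hahn_def)

lemma hahn_subset: "b \<in> hahn \<Longrightarrow> (\<And>q. a q \<noteq> 0 \<Longrightarrow> b q \<noteq> 0) \<Longrightarrow> a \<in> hahn"
  unfolding in_hahn by (erule wo_subset) auto

lemma hahn_finite: "finite {q. a q \<noteq> 0} \<Longrightarrow> a \<in> hahn"
  unfolding in_hahn hsupp_def by (rule wo_finite)

lemma conv_set_finite:
  assumes "a \<in> hahn" "b \<in> hahn"
  shows "finite {u. a u \<noteq> 0 \<and> b (q - u) \<noteq> 0}"
  using conv_finite[of "hsupp a" "hsupp b" q] assms by (simp add: hahn_def)

lemma hmul_eq_sum:
  assumes "finite F" "{u. a u \<noteq> 0 \<and> b (q - u) \<noteq> 0} \<subseteq> F"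
  shows "hmul a b q = (\<Sum>u\<in>F. a u * b (q - u))"
  unfolding hmul_def
  by (rule sum.mono_neutral_left) (use assms in auto)

lemma hmul_nonzero_ex:
  assumes "hmul a b q \<noteq> 0"
  shows "\<exists>u. a u \<noteq> 0 \<and> b (q - u) \<noteq> 0"
proof (rule ccontr)
  assume "\<not> ?thesis"
  then have e: "{u. a u \<noteq> 0 \<and> b (q - u) \<noteq> 0} = {}" by auto
  have "hmul a b q = 0" unfolding hmul_def e by simp
  then show False using assms by simp
qed

lemma hsupp_hmul: "hsupp (hmul a b) \<subseteq> sumset (hsupp a) (hsupp b)"
proof
  fix q assume "q \<in> hsupp (hmul a b)"
  then obtain u where "a u \<noteq> 0" "b (q - u) \<noteq> 0" using hmul_nonzero_ex by force
  then show "q \<in> sumset (hsupp a) (hsupp b)" unfolding sumset_def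
    by (intro CollectI exI[of _ u] exI[of _ "q - u"]) auto
qed

lemma hmul_hahn: "a \<in> hahn \<Longrightarrow> b \<in> hahn \<Longrightarrow> hmul a b \<in> hahn"
  unfolding in_hahn using wo_subset[OF wo_sumset hsupp_hmul] by blast

lemma hadd_hahn: fixes a :: "'f::comm_ring_1 hser" shows "a \<in> hahn \<Longrightarrow> b \<in> hahn \<Longrightarrow> hadd a b \<in> hahn"
  unfolding in_hahn
  by (rule wo_subset[OF wo_Un[of "hsupp a" "hsupp b"]]) (auto simp: hadd_def)

lemma hneg_hahn: fixes a :: "'f::comm_ring_1 hser" shows "a \<in> hahn \<Longrightarrow> hneg a \<in> hahn"
  unfolding in_hahn hsupp_def hneg_def by simp

lemma hzero_hahn: "hzero \<in> hahn"
  by (rule hahn_finite) (simp add: hzero_def)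

lemma hmono_hahn: "hmono c e \<in> hahn"
  by (rule hahn_finite, rule finite_subset[of _ "{e}"]) (auto simp: hmono_def)

lemma hone_hahn: "hone \<in> hahn"
  by (rule hahn_finite, rule finite_subset[of _ "{0}"]) (auto simp: hone_def)

lemma hmul_comm: "hmul a b = hmul b a"
proof
  fix q
  show "hmul a b q = hmul b a q"
    unfolding hmul_def
    by (rule sum.reindex_bij_witness[of _ "\<lambda>w. q - w" "\<lambda>u. q - u"]) (auto simp: mult.commute)
qed

lemma hmul_hone: "hmul hone b = b"
proof
  fix q
  have "hmul hone b q = (\<Sum>u\<in>{0}. hone u * b (q - u))"
    by (rule hmul_eq_sum) (auto simp: hone_def split: if_splits)
  then show "hmul hone b q = b q" by (simp add: hone_def)
qed

lemma hmul_distrib: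
  assumes "a \<in> hahn" "b \<in> hahn" "c \<in> hahn"
  shows "hmul (hadd a b) c = hadd (hmul a c) (hmul b c)"
proof
  fix q
  define F where "F = {u. a u \<noteq> 0 \<and> c (q - u) \<noteq> 0} \<union> {u. b u \<noteq> 0 \<and> c (q - u) \<noteq> 0}"
  have fF: "finite F" unfolding F_def using conv_set_finite assms by blast
  have "hmul (hadd a b) c q = (\<Sum>u\<in>F. hadd a b u * c (q - u))"
    by (rule hmul_eq_sum[OF fF]) (auto simp: F_def hadd_def)
  also have "\<dots> = (\<Sum>u\<in>F. a u * c (q - u)) + (\<Sum>u\<in>F. b u * c (q - u))"
    by (simp add: hadd_def distrib_right sum.distrib)
  also have "(\<Sum>u\<in>F. a u * c (q - u)) = hmul a c q"
    by (rule hmul_eq_sum[symmetric, OF fF]) (auto simp: F_def)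
  also have "(\<Sum>u\<in>F. b u * c (q - u)) = hmul b c q"
    by (rule hmul_eq_sum[symmetric, OF fF]) (auto simp: F_def)
  finally show "hmul (hadd a b) c q = hadd (hmul a c) (hmul b c) q" by (simp add: hadd_def)
qed

lemma hmul_assoc:
  assumes A: "a \<in> hahn" and B: "b \<in> hahn" and C: "c \<in> hahn"
  shows "hmul (hmul a b) c = hmul a (hmul b c)"
proof
  fix q
  define X where "X = {x \<in> sumset (hsupp a) (hsupp b). q - x \<in> hsupp c}"
  define U where "U x = {u. a u \<noteq> 0 \<and> b (x - u) \<noteq> 0}" for x
  define Y where "Y = {u \<in> hsupp a. q - u \<in> sumset (hsupp b) (hsupp c)}"
  define V where "V u = {w. b w \<noteq> 0 \<and> c (q - u - w) \<noteq> 0}" for u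
  have fX: "finite X" unfolding X_def
    by (rule conv_finite) (use A B C wo_sumset in \<open>auto simp: in_hahn\<close>)
  have fY: "finite Y" unfolding Y_def
    by (rule conv_finite) (use A B C wo_sumset in \<open>auto simp: in_hahn\<close>)
  have fU: "finite (U x)" for x unfolding U_def using conv_set_finite[OF A B] .
  have fV: "finite (V u)" for u unfolding V_def using conv_set_finite[OF B C] by simp
  have "hmul (hmul a b) c q = (\<Sum>x\<in>X. hmul a b x * c (q - x))"
  proof (rule hmul_eq_sum[OF fX], safe)
    fix x assume "hmul a b x \<noteq> 0" "c (q - x) \<noteq> 0"
    then show "x \<in> X" using hsupp_hmul[of a b] unfolding X_def by auto
  qed
  also have "\<dots> = (\<Sum>x\<in>X. \<Sum>u\<in>U x. a u * b (x - u) * c (q - x))"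
    by (simp add: hmul_def U_def sum_distrib_right)
  also have "\<dots> = (\<Sum>(x, u)\<in>Sigma X U. a u * b (x - u) * c (q - x))"
    by (rule sum.Sigma[OF fX]) (use fU in auto)
  also have "\<dots> = (\<Sum>(u, w)\<in>Sigma Y V. a u * (b w * c (q - u - w)))"
  proof (rule sum.reindex_bij_witness[of _ "\<lambda>(u, w). (u + w, u)" "\<lambda>(x, u). (u, x - u)"])
    fix uw assume "uw \<in> Sigma Y V"
    then show "(case (case uw of (u, w) \<Rightarrow> (u + w, u)) of (x, u) \<Rightarrow> (u, x - u)) = uw" by auto
  next
    fix uw assume "uw \<in> Sigma Y V"
    then show "(case uw of (u, w) \<Rightarrow> (u + w, u)) \<in> Sigma X U"
      unfolding X_def U_def Y_def V_def sumset_def by (auto simp: algebra_simps)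
  next
    fix xu assume "xu \<in> Sigma X U"
    then show "(case (case xu of (x, u) \<Rightarrow> (u, x - u)) of (u, w) \<Rightarrow> (u + w, u)) = xu" by auto
  next
    fix xu assume xu: "xu \<in> Sigma X U"
    obtain x u where xu': "xu = (x, u)" by (cases xu)
    have h: "c (q - x) \<noteq> 0" "a u \<noteq> 0" "b (x - u) \<noteq> 0"
      using xu unfolding xu' X_def U_def by auto
    have "q - u \<in> sumset (hsupp b) (hsupp c)"
      unfolding sumset_def
      apply (rule CollectI, rule exI[of _ "x - u"], rule exI[of _ "q - x"])
      using h by simp
    moreover have "q - u - (x - u) = q - x" by simp
    ultimately show "(case xu of (x, u) \<Rightarrow> (u, x - u)) \<in> Sigma Y V"
      unfolding xu' Y_def V_def using h by auto
  next
    fix xu assume "xu \<in> Sigma X U"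
    then show "(case case xu of (x, u) \<Rightarrow> (u, x - u) of (u, w) \<Rightarrow> a u * (b w * c (q - u - w))) =
         (case xu of (x, u) \<Rightarrow> a u * b (x - u) * c (q - x))"
      by (cases xu) (simp add: algebra_simps)
  qed
  also have "\<dots> = (\<Sum>u\<in>Y. \<Sum>w\<in>V u. a u * (b w * c (q - u - w)))"
    by (rule sum.Sigma[symmetric, OF fY]) (use fV in auto)
  also have "\<dots> = (\<Sum>u\<in>Y. a u * hmul b c (q - u))"
    by (simp add: hmul_def V_def sum_distrib_left)
  also have "\<dots> = hmul a (hmul b c) q"
  proof (rule hmul_eq_sum[symmetric, OF fY], safe)
    fix u assume "a u \<noteq> 0" "hmul b c (q - u) \<noteq> 0"
    then show "u \<in> Y" using hsupp_hmul[of b c] unfolding Y_def by auto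
  qed
  finally show "hmul (hmul a b) c q = hmul a (hmul b c) q" .
qed

section \<open>The type of Hahn series\<close>

typedef (overloaded) ('f::comm_ring_1) hahnT = "hahn :: 'f hser set"
  by (rule exI[of _ hzero]) (simp add: hzero_hahn)

lemma Rep_hahn[simp]: "Rep_hahnT x \<in> hahn"
  using Rep_hahnT by blast

lemma hahnT_eqI: "Rep_hahnT x = Rep_hahnT y \<Longrightarrow> x = y"
  by (simp add: Rep_hahnT_inject)

instantiation hahnT :: (comm_ring_1) comm_ring_1
begin
definition "0 = Abs_hahnT hzero"
definition "1 = Abs_hahnT hone"
definition "x + y = Abs_hahnT (hadd (Rep_hahnT x) (Rep_hahnT y))"
definition "- x = Abs_hahnT (hneg (Rep_hahnT x))"
definition "x - y = Abs_hahnT (hadd (Rep_hahnT x) (hneg (Rep_hahnT y)))"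
definition "x * y = Abs_hahnT (hmul (Rep_hahnT x) (Rep_hahnT y))"

lemma Rep_zero: "Rep_hahnT 0 = hzero"
  by (simp add: zero_hahnT_def Abs_hahnT_inverse hzero_hahn)
lemma Rep_one: "Rep_hahnT 1 = hone"
  by (simp add: one_hahnT_def Abs_hahnT_inverse hone_hahn)
lemma Rep_plus: "Rep_hahnT (x + y) = hadd (Rep_hahnT x) (Rep_hahnT y)"
  by (simp add: plus_hahnT_def Abs_hahnT_inverse hadd_hahn)
lemma Rep_uminus: "Rep_hahnT (- x) = hneg (Rep_hahnT x)"
  by (simp add: uminus_hahnT_def Abs_hahnT_inverse hneg_hahn)
lemma Rep_minus: "Rep_hahnT (x - y) = hadd (Rep_hahnT x) (hneg (Rep_hahnT y))"
  by (simp add: minus_hahnT_def Abs_hahnT_inverse hneg_hahn hadd_hahn)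
lemma Rep_times: "Rep_hahnT (x * y) = hmul (Rep_hahnT x) (Rep_hahnT y)"
  by (simp add: times_hahnT_def Abs_hahnT_inverse hmul_hahn)

instance
proof
  fix a b c :: "'a hahnT"
  show "a * b * c = a * (b * c)"
    by (rule hahnT_eqI) (simp add: Rep_times hmul_assoc hmul_hahn)
  show "a * b = b * a"
    by (rule hahnT_eqI) (simp add: Rep_times hmul_comm)
  show "1 * a = a"
    by (rule hahnT_eqI) (simp add: Rep_times Rep_one hmul_hone)
  show "a + b + c = a + (b + c)"
    by (rule hahnT_eqI) (simp add: Rep_plus hadd_def add.assoc)
  show "a + b = b + a"
    by (rule hahnT_eqI) (simp add: Rep_plus hadd_def add.commute)
  show "0 + a = a"
    by (rule hahnT_eqI) (simp add: Rep_plus Rep_zero hadd_def hzero_def)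
  show "- a + a = 0"
    by (rule hahnT_eqI) (simp add: Rep_plus Rep_uminus Rep_zero hadd_def hneg_def hzero_def)
  show "a - b = a + - b"
    by (rule hahnT_eqI) (simp add: Rep_plus Rep_uminus Rep_minus)
  show "(a + b) * c = a * c + b * c"
    by (rule hahnT_eqI) (simp add: Rep_plus Rep_times hmul_distrib)
  show "(0::'a hahnT) \<noteq> 1"
  proof
    assume "(0::'a hahnT) = 1"
    then have "Rep_hahnT (0::'a hahnT) 0 = Rep_hahnT (1::'a hahnT) 0" by simp
    then show False by (simp add: Rep_zero Rep_one hzero_def hone_def)
  qed
qed
end

section \<open>Valuation\<close>

lemma hahn_min:
  assumes "a \<in> hahn" "a \<noteq> hzero"
  obtains m where "a m \<noteq> 0" "\<And>q. a q \<noteq> 0 \<Longrightarrow> m \<le> q"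
proof -
  have "hsupp a \<noteq> {}" using assms(2) by (auto simp: hzero_def hsupp_def)
  then obtain m where "m \<in> hsupp a" "\<forall>x\<in>hsupp a. m \<le> x"
    using assms(1) unfolding in_hahn well_ordered_set_def by blast
  then show ?thesis using that by auto
qed

lemma hval_eq:
  assumes "a m \<noteq> 0" "\<And>q. a q \<noteq> 0 \<Longrightarrow> m \<le> q"
  shows "hval a = ereal (real_of_rat m)"
proof -
  have "a \<noteq> hzero" using assms(1) by (auto simp: hzero_def)
  moreover have "(LEAST q. a q \<noteq> 0) = m"
    by (rule Least_equality) (use assms in auto)
  ultimately show ?thesis by (simp add: hval_def)
qed

lemma hval_char:
  assumes "a \<in> hahn"
  shows "e \<le> hval a \<longleftrightarrow> (\<forall>q. a q \<noteq> 0 \<longrightarrow> e \<le> ereal (real_of_rat q))"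
proof (cases "a = hzero")
  case True
  then show ?thesis by (simp add: hval_def hzero_def)
next
  case False
  obtain m where m: "a m \<noteq> 0" "\<And>q. a q \<noteq> 0 \<Longrightarrow> m \<le> q" using hahn_min[OF assms False] by blast
  have hv: "hval a = ereal (real_of_rat m)" by (rule hval_eq) (use m in auto)
  show ?thesis
  proof
    assume "e \<le> hval a"
    then show "\<forall>q. a q \<noteq> 0 \<longrightarrow> e \<le> ereal (real_of_rat q)"
      using m(2) hv by (metis ereal_less_eq(3) of_rat_less_eq order.trans)
  next
    assume "\<forall>q. a q \<noteq> 0 \<longrightarrow> e \<le> ereal (real_of_rat q)"
    then show "e \<le> hval a" using m(1) hv by simp
  qed
qed

lemma hval_geI:
  assumes "a \<in> hahn" "\<And>q. a q \<noteq> 0 \<Longrightarrow> e \<le> ereal (real_of_rat q)"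
  shows "e \<le> hval a"
  using hval_char[OF assms(1)] assms(2) by blast

lemma hval_geD:
  assumes "a \<in> hahn" "e \<le> hval a" "a q \<noteq> 0"
  shows "e \<le> ereal (real_of_rat q)"
  using hval_char[OF assms(1)] assms(2,3) by blast

definition vT :: "'f::comm_ring_1 hahnT \<Rightarrow> ereal" where
  "vT x = hval (Rep_hahnT x)"

lemma vT_add: "min (vT x) (vT y) \<le> vT (x + y)"
  unfolding vT_def Rep_plus
proof (rule hval_geI)
  show "hadd (Rep_hahnT x) (Rep_hahnT y) \<in> hahn" by (simp add: hadd_hahn)
  fix q assume "hadd (Rep_hahnT x) (Rep_hahnT y) q \<noteq> 0"
  then have "Rep_hahnT x q \<noteq> 0 \<or> Rep_hahnT y q \<noteq> 0" by (auto simp: hadd_def)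
  then show "min (hval (Rep_hahnT x)) (hval (Rep_hahnT y)) \<le> ereal (real_of_rat q)"
    by (meson Rep_hahn hval_geD min.coboundedI1 min.coboundedI2 order_refl)
qed

lemma vT_uminus: "vT (- x) = vT x"
  unfolding vT_def Rep_uminus hval_def by (auto simp: hneg_def hzero_def fun_eq_iff)

lemma vT_diff: "min (vT x) (vT y) \<le> vT (x - y)"
  using vT_add[of x "- y"] by (simp add: vT_uminus)

lemma vT_mul: "vT x + vT y \<le> vT (x * y)"
  unfolding vT_def Rep_times
proof (rule hval_geI)
  show "hmul (Rep_hahnT x) (Rep_hahnT y) \<in> hahn" by (simp add: hmul_hahn)
  fix q assume "hmul (Rep_hahnT x) (Rep_hahnT y) q \<noteq> 0"
  then obtain u where u: "Rep_hahnT x u \<noteq> 0" "Rep_hahnT y (q - u) \<noteq> 0" using hmul_nonzero_ex by blast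
  have "hval (Rep_hahnT x) + hval (Rep_hahnT y) \<le> ereal (real_of_rat u) + ereal (real_of_rat (q - u))"
    by (rule add_mono; rule hval_geD[OF Rep_hahn order_refl]) (use u in auto)
  also have "\<dots> = ereal (real_of_rat q)" by (simp add: of_rat_diff)
  finally show "hval (Rep_hahnT x) + hval (Rep_hahnT y) \<le> ereal (real_of_rat q)" .
qed

lemma vT_one: "0 \<le> vT 1"
  unfolding vT_def Rep_one
  by (rule hval_geI[OF hone_hahn]) (auto simp: hone_def split: if_splits)

lemma vT_pow:
  assumes "ereal (real_of_rat d) \<le> vT x"
  shows "ereal (real_of_rat (of_nat l * d)) \<le> vT (x ^ l)"
proof (induction l)
  case 0
  then show ?case using vT_one by (simp add: zero_ereal_def)
next
  case (Suc l)
  have "ereal (real_of_rat (of_nat (Suc l) * d)) = ereal (real_of_rat d) + ereal (real_of_rat (of_nat l * d))"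
    by (simp add: algebra_simps of_rat_add of_rat_mult)
  also have "\<dots> \<le> vT x + vT (x ^ l)" by (rule add_mono[OF assms Suc])
  also have "\<dots> \<le> vT (x ^ Suc l)" using vT_mul by simp
  finally show ?case .
qed

lemma vT_sum:
  assumes "finite I"
  shows "(INF i\<in>I. vT (f i)) \<le> vT (sum f I)"
  using assms
proof (induction I rule: finite_induct)
  case empty
  then show ?case by (simp add: vT_def Rep_zero hval_def)
next
  case (insert i I)
  have "(INF j\<in>insert i I. vT (f j)) = min (vT (f i)) (INF j\<in>I. vT (f j))"
    by (simp add: inf_min)
  also have "\<dots> \<le> min (vT (f i)) (vT (sum f I))" using insert.IH by (simp add: min.coboundedI2)
  also have "\<dots> \<le> vT (f i + sum f I)" by (rule vT_add)
  finally show ?case using insert by simp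
qed

lemma Rep_eq_zero: "Rep_hahnT x = hzero \<longleftrightarrow> x = 0"
  by (metis Rep_hahnT_inject Rep_zero)

instance hahnT :: (idom) idom
proof
  fix x y :: "'a hahnT" assume x: "x \<noteq> 0" and y: "y \<noteq> 0"
  obtain mx where mx: "Rep_hahnT x mx \<noteq> 0" "\<And>q. Rep_hahnT x q \<noteq> 0 \<Longrightarrow> mx \<le> q"
    using hahn_min[OF Rep_hahn] x Rep_eq_zero by metis
  obtain my where my: "Rep_hahnT y my \<noteq> 0" "\<And>q. Rep_hahnT y q \<noteq> 0 \<Longrightarrow> my \<le> q"
    using hahn_min[OF Rep_hahn] y Rep_eq_zero by metis
  have "hmul (Rep_hahnT x) (Rep_hahnT y) (mx + my) = (\<Sum>u\<in>{mx}. Rep_hahnT x u * Rep_hahnT y (mx + my - u))"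
  proof (rule hmul_eq_sum, simp, safe)
    fix u assume "Rep_hahnT x u \<noteq> 0" "Rep_hahnT y (mx + my - u) \<noteq> 0"
    then have "mx \<le> u" "my \<le> mx + my - u" using mx(2) my(2) by auto
    then show "u = mx" by simp
  qed
  also have "\<dots> \<noteq> 0" using mx(1) my(1) by simp
  finally have "Rep_hahnT (x * y) (mx + my) \<noteq> 0" by (simp add: Rep_times)
  then show "x * y \<noteq> 0" by (auto simp: Rep_zero hzero_def)
qed

lemma hmul_hmono: "hmul (hmono c e) b q = c * b (q - e)"
proof -
  have "hmul (hmono c e) b q = (\<Sum>u\<in>{e}. hmono c e u * b (q - u))"
    by (rule hmul_eq_sum) (auto simp: hmono_def split: if_splits)
  then show ?thesis by (simp add: hmono_def)
qed

lemma hmul_hmono_fun: "hmul (hmono c e) b = (\<lambda>q. c * b (q - e))"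
  by (rule ext) (rule hmul_hmono)

lemma Rep_sum: "Rep_hahnT (sum f I) = (\<lambda>q. \<Sum>i\<in>I. Rep_hahnT (f i) q)"
proof (induction I rule: infinite_finite_induct)
  case (infinite A)
  then show ?case by (simp add: Rep_zero hzero_def)
next
  case empty
  then show ?case by (simp add: Rep_zero hzero_def)
next
  case (insert x F)
  then show ?case by (simp add: Rep_plus hadd_def)
qed

lemma hsum_finite:
  assumes "finite I"
  shows "hsum F I = (\<lambda>q. \<Sum>i\<in>I. F i q)"
  unfolding hsum_def
  by (rule ext, rule sum.mono_neutral_left) (use assms in auto)

lemma Rep_of_nat: "Rep_hahnT (of_nat n) = hmono (of_nat n) 0"
proof (induction n)
  case 0
  then show ?case by (simp add: Rep_zero hzero_def hmono_def fun_eq_iff)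
next
  case (Suc n)
  then show ?case by (simp add: Rep_plus Rep_one hadd_def hone_def hmono_def fun_eq_iff)
qed

lemma Rep_of_nat_mult: "Rep_hahnT (of_nat n * x) = (\<lambda>q. of_nat n * Rep_hahnT x q)"
  by (rule ext) (simp add: Rep_times Rep_of_nat hmul_hmono)

lemma Rep_Abs: "a \<in> hahn \<Longrightarrow> Rep_hahnT (Abs_hahnT a) = a"
  by (simp add: Abs_hahnT_inverse)

lemma heval_T:
  assumes "set cs \<subseteq> hahn" "x \<in> hahn"
  shows "heval cs x = Rep_hahnT (\<Sum>k<length cs. Abs_hahnT (cs ! k) * Abs_hahnT x ^ k)"
  using assms(1)
proof (induction cs)
  case Nil
  then show ?case by (simp add: heval_def Rep_zero)
next
  case (Cons c cs)
  have "(\<Sum>k<length (c # cs). Abs_hahnT ((c # cs) ! k) * Abs_hahnT x ^ k)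
      = Abs_hahnT c + Abs_hahnT x * (\<Sum>k<length cs. Abs_hahnT (cs ! k) * Abs_hahnT x ^ k)"
    by (simp add: sum.lessThan_Suc_shift sum_distrib_left algebra_simps del: sum.lessThan_Suc)
  then show ?case using Cons assms(2)
    by (simp add: heval_def Rep_plus Rep_times Rep_Abs)
qed

lemma hpow_T:
  assumes "x \<in> hahn"
  shows "hpow x n = Rep_hahnT (Abs_hahnT x ^ n)"
proof (induction n)
  case 0
  then show ?case by (simp add: hpow_def Rep_one)
next
  case (Suc n)
  then show ?case using assms by (simp add: hpow_def Rep_times Rep_Abs)
qed

lemma taylor_T:
  assumes "set cs \<subseteq> hahn" "c \<in> hahn"
  shows "taylor_coeff cs c l = Rep_hahnT (\<Sum>k\<in>{l..<length cs}. of_nat (k choose l) * Abs_hahnT (cs ! k) * Abs_hahnT c ^ (k - l))"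
proof -
  have t: "hmul (\<lambda>q. of_nat (k choose l) * (cs ! k) q) (hpow c (k - l))
      = Rep_hahnT (of_nat (k choose l) * Abs_hahnT (cs ! k) * Abs_hahnT c ^ (k - l))"
    if "k \<in> {l..<length cs}" for k
  proof -
    have "cs ! k \<in> hahn" using that assms(1) by auto
    then show ?thesis using assms(2)
      by (simp add: Rep_times Rep_of_nat hmul_hmono_fun hpow_T Rep_Abs)
  qed
  show ?thesis unfolding taylor_coeff_def hsum_finite[OF finite_atLeastLessThan] Rep_sum
    using t by simp
qed

lemma taylor_identity:
  fixes a :: "nat \<Rightarrow> 'a::comm_ring_1"
  shows "(\<Sum>k<N. a k * x ^ k) = (\<Sum>l<N. (\<Sum>k\<in>{l..<N}. of_nat (k choose l) * a k * c ^ (k - l)) * (x - c) ^ l)"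
proof -
  have "(\<Sum>k<N. a k * x ^ k) = (\<Sum>k<N. \<Sum>l<N. a k * (of_nat (k choose l) * (x - c) ^ l * c ^ (k - l)))"
  proof (rule sum.cong[OF refl])
    fix k assume k: "k \<in> {..<N}"
    have "x ^ k = ((x - c) + c) ^ k" by simp
    also have "\<dots> = (\<Sum>l\<le>k. of_nat (k choose l) * (x - c) ^ l * c ^ (k - l))" by (rule binomial_ring)
    also have "\<dots> = (\<Sum>l<N. of_nat (k choose l) * (x - c) ^ l * c ^ (k - l))"
    proof (rule sum.mono_neutral_left)
      show "\<forall>i\<in>{..<N} - {..k}. of_nat (k choose i) * (x - c) ^ i * c ^ (k - i) = 0"
        by (auto simp: binomial_eq_0)
    qed (use k in auto)
    finally show "a k * x ^ k = (\<Sum>l<N. a k * (of_nat (k choose l) * (x - c) ^ l * c ^ (k - l)))"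
      by (simp add: sum_distrib_left)
  qed
  also have "\<dots> = (\<Sum>l<N. \<Sum>k<N. a k * (of_nat (k choose l) * (x - c) ^ l * c ^ (k - l)))"
    by (rule sum.swap)
  also have "\<dots> = (\<Sum>l<N. (\<Sum>k\<in>{l..<N}. of_nat (k choose l) * a k * c ^ (k - l)) * (x - c) ^ l)"
  proof (rule sum.cong[OF refl])
    fix l assume l: "l \<in> {..<N}"
    have "(\<Sum>k<N. a k * (of_nat (k choose l) * (x - c) ^ l * c ^ (k - l)))
        = (\<Sum>k\<in>{l..<N}. a k * (of_nat (k choose l) * (x - c) ^ l * c ^ (k - l)))"
      by (rule sum.mono_neutral_right) (auto simp: binomial_eq_0 not_le)
    then show "(\<Sum>k<N. a k * (of_nat (k choose l) * (x - c) ^ l * c ^ (k - l)))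
        = (\<Sum>k\<in>{l..<N}. of_nat (k choose l) * a k * c ^ (k - l)) * (x - c) ^ l"
      by (simp add: sum_distrib_right sum_distrib_left algebra_simps)
  qed
  finally show ?thesis .
qed

lemma w_pos: "p \<ge> 2 \<Longrightarrow> 0 < 1 / (of_nat p ^ (j + 1) :: rat)"
  by simp

lemma w_le_half:
  assumes "p \<ge> 2" shows "1 / (of_nat p ^ (j + 1) :: rat) \<le> 1 / 2"
proof -
  have "(2::rat) \<le> of_nat p" using assms by simp
  also have "\<dots> \<le> of_nat p ^ (j + 1)" using assms by (simp add: self_le_power)
  finally show ?thesis by (simp add: frac_le)
qed

lemma w_less:
  assumes "p \<ge> 2" "j < j'"
  shows "1 / (of_nat p ^ (j' + 1) :: rat) < 1 / of_nat p ^ (j + 1)"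
proof -
  have "(of_nat p ^ (j + 1) :: rat) < of_nat p ^ (j' + 1)"
    using assms by (intro power_strict_increasing) auto
  then show ?thesis using assms by (simp add: frac_less2)
qed

lemma delta_shift: "delta p m j = of_nat m + delta p 0 j"
  by (simp add: delta_def)

lemma delta_less:
  assumes p: "p \<ge> 2"
  shows "delta p m j < delta p n i \<longleftrightarrow> m < n \<or> (m = n \<and> j < i)"
proof -
  have wj: "0 < 1 / (of_nat p ^ (j + 1) :: rat)" "1 / (of_nat p ^ (j + 1) :: rat) \<le> 1 / 2"
    using w_pos[OF p] w_le_half[OF p] by auto
  have wi: "0 < 1 / (of_nat p ^ (i + 1) :: rat)" "1 / (of_nat p ^ (i + 1) :: rat) \<le> 1 / 2"
    using w_pos[OF p] w_le_half[OF p] by auto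
  consider "m < n" | "m = n" | "n < m" by linarith
  then show ?thesis
  proof cases
    case 1
    then have "m + 1 \<le> n" by simp
    then have "(of_nat (m + 1) :: rat) \<le> of_nat n" by (simp only: of_nat_le_iff)
    then have "(of_nat m :: rat) + 1 \<le> of_nat n" by simp
    then have "delta p m j < delta p n i" unfolding delta_def using wj wi by linarith
    then show ?thesis using 1 by simp
  next
    case 2
    then show ?thesis
      using w_less[OF p, of j i] w_less[OF p, of i j]
      by (cases "j < i"; cases "i < j") (auto simp: delta_def)
  next
    case 3
    then have "n + 1 \<le> m" by simp
    then have "(of_nat (n + 1) :: rat) \<le> of_nat m" by (simp only: of_nat_le_iff)
    then have "(of_nat n :: rat) + 1 \<le> of_nat m" by simp
    then have "\<not> delta p m j < delta p n i" unfolding delta_def using wj wi by linarith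
    then show ?thesis using 3 by simp
  qed
qed

lemma delta_inj:
  assumes p: "p \<ge> 2"
  shows "delta p m j = delta p n i \<longleftrightarrow> m = n \<and> j = i"
  using delta_less[OF p, of m j n i] delta_less[OF p, of n i m j]
  by (metis less_irrefl nat_neq_iff)

lemma delta_lower:
  assumes p: "p \<ge> 2"
  shows "of_nat m - 1/2 \<le> delta p m j" "delta p m j < of_nat m"
  using w_pos[OF p, of j] w_le_half[OF p, of j] by (auto simp: delta_def)

lemma wo_delta:
  assumes p: "p \<ge> 2"
  shows "well_ordered_set {q. \<exists>a b. q = delta p a b}"
  unfolding well_ordered_set_def
proof (intro allI impI)
  fix B assume B: "B \<subseteq> {q. \<exists>a b. q = delta p a b}" "B \<noteq> {}"
  define m0 where "m0 = (LEAST m. \<exists>j. delta p m j \<in> B)"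
  have ex: "\<exists>m j. delta p m j \<in> B" using B by blast
  then have m0: "\<exists>j. delta p m0 j \<in> B" unfolding m0_def by (rule LeastI_ex)
  define j0 where "j0 = (LEAST j. delta p m0 j \<in> B)"
  have j0: "delta p m0 j0 \<in> B" unfolding j0_def using m0 by (rule LeastI_ex)
  show "\<exists>m\<in>B. \<forall>x\<in>B. m \<le> x"
  proof (intro bexI[OF _ j0] ballI)
    fix x assume x: "x \<in> B"
    then obtain a b where ab: "x = delta p a b" using B by blast
    have "m0 \<le> a" unfolding m0_def using x ab by (metis (mono_tags, lifting) Least_le)
    moreover have "a = m0 \<Longrightarrow> j0 \<le> b" unfolding j0_def using x ab by (metis Least_le)
    ultimately show "delta p m0 j0 \<le> x" unfolding ab
      using delta_less[OF p, of a b m0 j0] by (metis le_neq_implies_less not_le)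
  qed
qed

lemma hahn_delta:
  assumes p: "p \<ge> 2" and f: "\<And>q. f q \<noteq> 0 \<Longrightarrow> \<exists>a b. q = delta p a b"
  shows "f \<in> hahn"
  unfolding in_hahn by (rule wo_subset[OF wo_delta[OF p]]) (use f in auto)

section \<open>Coefficients of s, s_m and the truncations\<close>

lemma hmul_hmono1: "hmul (hmono 1 e) b = (\<lambda>q. b (q - e))"
  by (simp add: hmul_hmono_fun)

lemma hsum_single:
  assumes "\<And>i. i \<in> I \<Longrightarrow> i \<noteq> i0 \<Longrightarrow> F i q = 0"
  shows "hsum F I q = (if i0 \<in> I then F i0 q else 0)"
proof -
  have "{i \<in> I. F i q \<noteq> 0} = (if i0 \<in> I \<and> F i0 q \<noteq> 0 then {i0} else {})"
    using assms by auto
  then show ?thesis unfolding hsum_def by (auto split: if_splits)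
qed

lemma hsum_zero:
  assumes "\<And>i. i \<in> I \<Longrightarrow> F i q = 0"
  shows "hsum F I q = 0"
proof -
  have "{i \<in> I. F i q \<noteq> 0} = {}" using assms by auto
  then show ?thesis unfolding hsum_def by simp
qed

lemma sm_exp: "(- 1 / of_nat p ^ (j + 1) :: rat) = delta p 0 j"
  by (simp add: delta_def)

lemma s_m_alt: "s_m p m = hsum (\<lambda>j. hmono (of_nat (j choose m)) (delta p 0 j)) {m..}"
  unfolding s_m_def sm_exp ..

lemma sm_at:
  assumes p: "p \<ge> 2"
  shows "(s_m p m (delta p 0 j) :: 'f::comm_ring_1) = of_nat (j choose m)"
proof -
  have "(s_m p m (delta p 0 j) :: 'f) = (if j \<in> {m..} then hmono (of_nat (j choose m)) (delta p 0 j) (delta p 0 j) else 0)"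
    unfolding s_m_alt
    by (rule hsum_single) (auto simp: hmono_def delta_inj[OF p])
  then show ?thesis by (auto simp: hmono_def binomial_eq_0)
qed

lemma sm_off:
  assumes "\<And>j. q \<noteq> delta p 0 j"
  shows "(s_m p m q :: 'f::comm_ring_1) = 0"
  unfolding s_m_alt by (rule hsum_zero) (use assms in \<open>auto simp: hmono_def\<close>)

lemma s_ser_alt: "s_ser p = hsum (\<lambda>m q. s_m p m (q - of_nat m)) UNIV"
  unfolding s_ser_def hmul_hmono1 by simp

lemma sser_at:
  assumes p: "p \<ge> 2"
  shows "(s_ser p (delta p a b) :: 'f::comm_ring_1) = of_nat (b choose a)"
proof -
  have "(s_ser p (delta p a b) :: 'f) = (if a \<in> UNIV then s_m p a (delta p a b - of_nat a) else 0)"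
    unfolding s_ser_alt
  proof (rule hsum_single)
    fix m assume "m \<noteq> a"
    then have "delta p a b - of_nat m \<noteq> delta p 0 j" for j
      using delta_inj[OF p, of a b m j] delta_shift[of p m j] by auto
    then show "(s_m p m (delta p a b - of_nat m) :: 'f) = 0" by (rule sm_off)
  qed
  also have "delta p a b - of_nat a = delta p 0 b" using delta_shift[of p a b] by simp
  finally show ?thesis using sm_at[OF p] by simp
qed

lemma sser_off:
  assumes "\<And>a b. q \<noteq> delta p a b"
  shows "(s_ser p q :: 'f::comm_ring_1) = 0"
  unfolding s_ser_alt
proof (rule hsum_zero)
  fix m
  have "q - of_nat m \<noteq> delta p 0 j" for j
    using assms[of m j] delta_shift[of p m j] by auto
  then show "(s_m p m (q - of_nat m) :: 'f) = 0" by (rule sm_off)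
qed

lemma strunc_at:
  assumes p: "p \<ge> 2"
  shows "(s_trunc p n i (delta p a b) :: 'f::comm_ring_1)
     = (if delta p a b < delta p n i then of_nat (b choose a) else 0)"
proof -
  define A :: "'f hser" where "A = hsum (\<lambda>m. hmul (hmono 1 (of_nat m)) (s_m p m)) {..<n}"
  define H :: "nat \<Rightarrow> 'f hser" where "H = (\<lambda>j. hmono (of_nat (j choose n)) (- 1 / of_nat p ^ (j + 1)))"
  have H: "H = (\<lambda>j. hmono (of_nat (j choose n)) (delta p 0 j))" unfolding H_def sm_exp ..
  have st: "s_trunc p n i = hadd A (hmul (hmono 1 (of_nat n)) (hsum H {n..<i}))"
    unfolding s_trunc_def A_def H_def ..
  have Aat: "A (delta p a b) = (if a < n then of_nat (b choose a) else 0)"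
  proof -
    have "A (delta p a b) = (if a \<in> {..<n} then s_m p a (delta p a b - of_nat a) else 0)"
      unfolding A_def hmul_hmono1
    proof (rule hsum_single)
      fix m assume "m \<noteq> a"
      then have "delta p a b - of_nat m \<noteq> delta p 0 j" for j
        using delta_inj[OF p, of a b m j] delta_shift[of p m j] by auto
      then show "(s_m p m (delta p a b - of_nat m) :: 'f) = 0" by (simp add: sm_off)
    qed
    also have "delta p a b - of_nat a = delta p 0 b" using delta_shift[of p a b] by simp
    finally show ?thesis using sm_at[OF p, where 'f='f, of a b] by simp
  qed
  have Bat: "hsum H {n..<i} (delta p a b - of_nat n) = (if a = n \<and> n \<le> b \<and> b < i then of_nat (b choose a) else 0)"
  proof (cases "a = n")
    case True
    then have e: "delta p a b - of_nat n = delta p 0 b" using delta_shift[of p a b] by simp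
    have "hsum H {n..<i} (delta p 0 b) = (if b \<in> {n..<i} then H b (delta p 0 b) else 0)"
      by (rule hsum_single) (auto simp: H hmono_def delta_inj[OF p])
    then show ?thesis using True e by (simp add: H hmono_def)
  next
    case False
    have "hsum H {n..<i} (delta p a b - of_nat n) = 0"
    proof (rule hsum_zero)
      fix j
      have "delta p a b - of_nat n \<noteq> delta p 0 j"
        using delta_inj[OF p, of a b n j] delta_shift[of p n j] False by auto
      then show "H j (delta p a b - of_nat n) = 0" by (simp add: H hmono_def)
    qed
    then show ?thesis using False by simp
  qed
  show ?thesis
    unfolding st hadd_def hmul_hmono1 using Aat Bat delta_less[OF p, of a b n i]
    by (auto simp: binomial_eq_0)
qed

lemma strunc_off:
  assumes "\<And>a b. q \<noteq> delta p a b"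
  shows "(s_trunc p n i q :: 'f::comm_ring_1) = 0"
proof -
  have A: "hsum (\<lambda>m q. s_m p m (q - of_nat m)) {..<n} q = (0::'f)"
  proof (rule hsum_zero)
    fix m
    have "q - of_nat m \<noteq> delta p 0 j" for j
      using assms[of m j] delta_shift[of p m j] by auto
    then show "(s_m p m (q - of_nat m) :: 'f) = 0" by (simp add: sm_off)
  qed
  have B: "hsum (\<lambda>j. hmono (of_nat (j choose n)) (delta p 0 j)) {n..<i} (q - of_nat n) = (0::'f)"
  proof (rule hsum_zero)
    fix j
    have "q - of_nat n \<noteq> delta p 0 j"
      using assms[of n j] delta_shift[of p n j] by auto
    then show "hmono (of_nat (j choose n)) (delta p 0 j) (q - of_nat n) = (0::'f)" by (simp add: hmono_def)
  qed
  show ?thesis unfolding s_trunc_def hadd_def hmul_hmono1 sm_exp using A B by simp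
qed

lemma sm_hahn: "p \<ge> 2 \<Longrightarrow> (s_m p m :: 'f::comm_ring_1 hser) \<in> hahn"
  by (rule hahn_delta) (use sm_off in blast)+

lemma sser_hahn: "p \<ge> 2 \<Longrightarrow> (s_ser p :: 'f::comm_ring_1 hser) \<in> hahn"
  by (rule hahn_delta) (use sser_off in blast)+

lemma strunc_hahn: "p \<ge> 2 \<Longrightarrow> (s_trunc p n i :: 'f::comm_ring_1 hser) \<in> hahn"
  by (rule hahn_delta) (use strunc_off in blast)+

lemma delta_form:
  assumes "f q \<noteq> 0" "\<And>q. (\<And>a b. q \<noteq> delta p a b) \<Longrightarrow> f q = 0"
  obtains a b where "q = delta p a b"
  using assms by blast

lemma trunc_diff_nonzero:
  assumes p: "p \<ge> 2"
    and nz: "hadd (s_trunc p n i) (hneg (s_trunc p m j)) q \<noteq> (0::'f::comm_ring_1)"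
  shows "\<exists>a b. q = delta p a b \<and> (delta p a b < delta p n i) \<noteq> (delta p a b < delta p m j)"
proof -
  have "\<exists>a b. q = delta p a b"
  proof (rule ccontr)
    assume "\<not> ?thesis"
    then have "\<And>a b. q \<noteq> delta p a b" by blast
    then have "(s_trunc p n i q :: 'f) = 0" "(s_trunc p m j q :: 'f) = 0" by (auto intro: strunc_off)
    then show False using nz by (simp add: hadd_def hneg_def)
  qed
  then obtain a b where q: "q = delta p a b" by blast
  show ?thesis
  proof (intro exI conjI)
    show "q = delta p a b" by fact
    show "(delta p a b < delta p n i) \<noteq> (delta p a b < delta p m j)"
      using nz unfolding q hadd_def hneg_def strunc_at[OF p] by (auto split: if_splits)
  qed
qed

lemma ser_trunc_nonzero:
  assumes p: "p \<ge> 2"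
    and nz: "hadd (s_ser p) (hneg (s_trunc p n i)) q \<noteq> (0::'f::comm_ring_1)"
  shows "delta p n i \<le> q"
proof -
  have "\<exists>a b. q = delta p a b"
  proof (rule ccontr)
    assume "\<not> ?thesis"
    then have "\<And>a b. q \<noteq> delta p a b" by blast
    then have "(s_trunc p n i q :: 'f) = 0" "(s_ser p q :: 'f) = 0" by (auto intro: strunc_off sser_off)
    then show False using nz by (simp add: hadd_def hneg_def)
  qed
  then obtain a b where q: "q = delta p a b" by blast
  show ?thesis
    using nz unfolding q hadd_def hneg_def strunc_at[OF p] sser_at[OF p] by (auto split: if_splits)
qed

lemma hval_trunc_diff_less:
  assumes p: "p \<ge> 2" and lt: "delta p m j < delta p n i"
    and nz: "(of_nat (j choose m) :: 'f::comm_ring_1) \<noteq> 0"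
  shows "hval (hadd (s_trunc p n i) (hneg (s_trunc p m j)) :: 'f hser) = ereal (real_of_rat (delta p m j))"
proof (rule hval_eq)
  show "hadd (s_trunc p n i) (hneg (s_trunc p m j)) (delta p m j) \<noteq> (0::'f)"
    using lt nz by (simp add: hadd_def hneg_def strunc_at[OF p])
  fix q assume "hadd (s_trunc p n i) (hneg (s_trunc p m j)) q \<noteq> (0::'f)"
  then obtain a b where "q = delta p a b" "(delta p a b < delta p n i) \<noteq> (delta p a b < delta p m j)"
    using trunc_diff_nonzero[OF p] by blast
  then show "delta p m j \<le> q" using lt by auto
qed

lemma hval_trunc_diff_ge:
  assumes p: "p \<ge> 2" and le: "delta p n i \<le> delta p m j"
  shows "ereal (real_of_rat (delta p n i)) \<le> hval (hadd (s_trunc p n i) (hneg (s_trunc p m j)) :: 'f::comm_ring_1 hser)"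
proof (rule hval_geI)
  show "hadd (s_trunc p n i) (hneg (s_trunc p m j)) \<in> (hahn :: 'f hser set)"
    by (simp add: hadd_hahn hneg_hahn strunc_hahn[OF p])
  fix q assume "hadd (s_trunc p n i) (hneg (s_trunc p m j)) q \<noteq> (0::'f)"
  then obtain a b where "q = delta p a b" "(delta p a b < delta p n i) \<noteq> (delta p a b < delta p m j)"
    using trunc_diff_nonzero[OF p] by blast
  then have "delta p n i \<le> q" using le by auto
  then show "ereal (real_of_rat (delta p n i)) \<le> ereal (real_of_rat q)" by (simp add: of_rat_less_eq)
qed

lemma hval_hone: "hval (hone :: 'f::comm_ring_1 hser) = 0"
proof -
  have "hval (hone :: 'f hser) = ereal (real_of_rat 0)"
    by (rule hval_eq) (auto simp: hone_def split: if_splits)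
  then show ?thesis by (simp add: zero_ereal_def)
qed

lemma vdepth0_linear:
  fixes x c :: "'f::comm_ring_1 hser"
  assumes x: "x \<in> hahn" and c: "c \<in> hahn"
  shows "vdepth0 c d [hneg x, hone] = min (hval (hadd c (hneg x))) (ereal (real_of_rat d))"
proof -
  have cs: "set [hneg x, hone] \<subseteq> hahn" using x by (simp add: hneg_hahn hone_hahn)
  have t0: "taylor_coeff [hneg x, hone] c 0 = hadd c (hneg x)"
    unfolding taylor_T[OF cs c]
    by (simp add: numeral_2_eq_2 Rep_plus Rep_times Rep_one Rep_Abs hneg_hahn hone_hahn x c hmul_hone
        hmul_comm[of hone] hadd_def fun_eq_iff add.commute)
  have t1: "taylor_coeff [hneg x, hone] c (Suc 0) = hone"
    unfolding taylor_T[OF cs c]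
    by (simp add: numeral_2_eq_2 Rep_times Rep_one Rep_Abs hone_hahn)
  have "{..<length [hneg x, hone]} = {0, 1}" by auto
  then show ?thesis unfolding vdepth0_def
    by (simp add: t0 t1 hval_hone inf_min zero_ereal_def)
qed

theorem part1:
  fixes p :: nat
  assumes p: "p \<ge> 2" and ch: "CHAR('f::comm_ring_1) = p"
    and ni: "(n, i) \<in> S_set p" and mj: "(m, j) \<in> S_set p"
  shows "v_ni p n i [hneg (s_trunc p m j :: 'f hser), hone]
              = ereal (real_of_rat (min (delta p n i) (delta p m j)))"
proof -
  have v: "v_ni p n i [hneg (s_trunc p m j :: 'f hser), hone]
      = min (hval (hadd (s_trunc p n i) (hneg (s_trunc p m j)) :: 'f hser)) (ereal (real_of_rat (delta p n i)))"
    unfolding v_ni_def by (rule vdepth0_linear) (simp_all add: strunc_hahn[OF p])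
  show ?thesis
  proof (cases "delta p m j < delta p n i")
    case True
    have "(of_nat (j choose m) :: 'f) \<noteq> 0"
      using mj ch by (simp add: S_set_def of_nat_eq_0_iff_char_dvd)
    then have "hval (hadd (s_trunc p n i) (hneg (s_trunc p m j)) :: 'f hser) = ereal (real_of_rat (delta p m j))"
      using hval_trunc_diff_less[OF p True] by blast
    then show ?thesis unfolding v using True by (simp add: min_def of_rat_less_eq)
  next
    case False
    then have le: "delta p n i \<le> delta p m j" by simp
    have "ereal (real_of_rat (delta p n i)) \<le> hval (hadd (s_trunc p n i) (hneg (s_trunc p m j)) :: 'f hser)"
      by (rule hval_trunc_diff_ge[OF p le])
    then show ?thesis unfolding v using le by (simp add: min_def)
  qed
qed

lemma vT_S_minus_C:
  assumes p: "p \<ge> 2"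
  shows "ereal (real_of_rat (delta p n i)) \<le> vT (Abs_hahnT (s_ser p) - Abs_hahnT (s_trunc p n i) :: 'f::comm_ring_1 hahnT)"
  unfolding vT_def Rep_minus Rep_Abs[OF sser_hahn[OF p]] Rep_Abs[OF strunc_hahn[OF p]]
proof (rule hval_geI)
  show "hadd (s_ser p) (hneg (s_trunc p n i)) \<in> (hahn :: 'f hser set)"
    by (simp add: hadd_hahn hneg_hahn strunc_hahn[OF p] sser_hahn[OF p])
  fix q assume "hadd (s_ser p) (hneg (s_trunc p n i)) q \<noteq> (0::'f)"
  then have "delta p n i \<le> q" by (rule ser_trunc_nonzero[OF p])
  then show "ereal (real_of_rat (delta p n i)) \<le> ereal (real_of_rat q)" by (simp add: of_rat_less_eq)
qed

theorem vni_le_vs: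
  fixes cs :: "'f::comm_ring_1 hser list"
  assumes p: "p \<ge> 2" and cs: "set cs \<subseteq> hahn"
  shows "v_ni p n i cs \<le> v_s p cs"
proof -
  define N where "N = length cs"
  define a where "a k = (Abs_hahnT (cs ! k) :: 'f hahnT)" for k
  define S where "S = (Abs_hahnT (s_ser p) :: 'f hahnT)"
  define C where "C = (Abs_hahnT (s_trunc p n i) :: 'f hahnT)"
  define T where "T l = (\<Sum>k\<in>{l..<N}. of_nat (k choose l) * a k * C ^ (k - l))" for l
  have sh: "s_ser p \<in> (hahn :: 'f hser set)" by (rule sser_hahn[OF p])
  have ch: "s_trunc p n i \<in> (hahn :: 'f hser set)" by (rule strunc_hahn[OF p])
  have "v_s p cs = vT (\<Sum>k<N. a k * S ^ k)"
    unfolding v_s_def vT_def heval_T[OF cs sh] N_def a_def S_def ..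
  also have "(\<Sum>k<N. a k * S ^ k) = (\<Sum>l<N. T l * (S - C) ^ l)"
    unfolding T_def by (rule taylor_identity)
  finally have vs: "v_s p cs = vT (\<Sum>l<N. T l * (S - C) ^ l)" .
  have tc: "taylor_coeff cs (s_trunc p n i) l = Rep_hahnT (T l)" for l
    unfolding taylor_T[OF cs ch] T_def N_def a_def C_def ..
  have vni: "v_ni p n i cs = (INF l\<in>{..<N}. vT (T l) + ereal (real_of_rat (of_nat l * delta p n i)))"
    unfolding v_ni_def vdepth0_def tc vT_def N_def ..
  have dS: "ereal (real_of_rat (delta p n i)) \<le> vT (S - C)"
    unfolding S_def C_def by (rule vT_S_minus_C[OF p])
  have "v_ni p n i cs \<le> (INF l\<in>{..<N}. vT (T l * (S - C) ^ l))"
    unfolding vni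
  proof (rule INF_mono)
    fix l assume "l \<in> {..<N}"
    have "vT (T l) + ereal (real_of_rat (of_nat l * delta p n i)) \<le> vT (T l) + vT ((S - C) ^ l)"
      by (rule add_mono[OF order_refl vT_pow[OF dS]])
    also have "\<dots> \<le> vT (T l * (S - C) ^ l)" by (rule vT_mul)
    finally show "\<exists>m\<in>{..<N}. vT (T m) + ereal (real_of_rat (of_nat m * delta p n i)) \<le> vT (T l * (S - C) ^ l)"
      using \<open>l \<in> {..<N}\<close> by blast
  qed
  also have "\<dots> \<le> vT (\<Sum>l<N. T l * (S - C) ^ l)" by (rule vT_sum) simp
  finally show ?thesis using vs by simp
qed

section \<open>The field K\<close>

definition den :: "nat \<Rightarrow> rat \<Rightarrow> bool" where
  "den N q \<longleftrightarrow> (\<exists>k::int. q = of_int k / of_nat N)"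

lemma den_mult: "den N q \<Longrightarrow> N' \<ge> 1 \<Longrightarrow> den (N * N') q"
  unfolding den_def
proof (elim exE)
  fix k assume q: "q = of_int k / of_nat N" and N': "N' \<ge> 1"
  show "\<exists>k'. q = of_int k' / of_nat (N * N')"
    by (rule exI[of _ "k * int N'"]) (use q N' in simp)
qed

lemma den_add: "den N u \<Longrightarrow> den N w \<Longrightarrow> den N (u + w)"
  unfolding den_def
proof (elim exE)
  fix k1 k2 assume "u = of_int k1 / of_nat N" "w = of_int k2 / of_nat N"
  then show "\<exists>k. u + w = of_int k / of_nat N"
    by (intro exI[of _ "k1 + k2"]) (simp add: add_divide_distrib)
qed

lemma den_0: "den N 0"
  unfolding den_def by (rule exI[of _ 0]) simp

lemma K_set_iff: "a \<in> K_set \<longleftrightarrow> a \<in> hahn \<and> (\<exists>N\<ge>1. \<forall>q. a q \<noteq> 0 \<longrightarrow> den N q)"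
  unfolding K_set_def den_def by blast

lemma K_hadd:
  fixes a b :: "'f::comm_ring_1 hser"
  assumes "a \<in> K_set" "b \<in> K_set" shows "hadd a b \<in> K_set"
proof -
  obtain N1 where N1: "N1 \<ge> 1" "\<forall>q. a q \<noteq> 0 \<longrightarrow> den N1 q" using assms(1) K_set_iff by blast
  obtain N2 where N2: "N2 \<ge> 1" "\<forall>q. b q \<noteq> 0 \<longrightarrow> den N2 q" using assms(2) K_set_iff by blast
  have "\<forall>q. hadd a b q \<noteq> 0 \<longrightarrow> den (N1 * N2) q"
  proof (intro allI impI)
    fix q assume "hadd a b q \<noteq> 0"
    then have "a q \<noteq> 0 \<or> b q \<noteq> 0" by (auto simp: hadd_def)
    then show "den (N1 * N2) q"
      using N1 N2 den_mult[of N1 q N2] den_mult[of N2 q N1] by (auto simp: mult.commute)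
  qed
  moreover have "N1 * N2 \<ge> 1" using N1 N2 by simp
  moreover have "hadd a b \<in> hahn" using assms by (simp add: K_set_iff hadd_hahn)
  ultimately show ?thesis unfolding K_set_iff by blast
qed

lemma K_hneg:
  fixes a :: "'f::comm_ring_1 hser"
  assumes "a \<in> K_set" shows "hneg a \<in> K_set"
proof -
  have "hneg a \<in> hahn" using assms by (simp add: K_set_iff hneg_hahn)
  moreover have "\<exists>N\<ge>1. \<forall>q. hneg a q \<noteq> 0 \<longrightarrow> den N q" using assms by (auto simp: K_set_iff hneg_def)
  ultimately show ?thesis unfolding K_set_iff by blast
qed

lemma K_hmul:
  fixes a b :: "'f::comm_ring_1 hser"
  assumes "a \<in> K_set" "b \<in> K_set" shows "hmul a b \<in> K_set"
proof -
  obtain N1 where N1: "N1 \<ge> 1" "\<forall>q. a q \<noteq> 0 \<longrightarrow> den N1 q" using assms(1) K_set_iff by blast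
  obtain N2 where N2: "N2 \<ge> 1" "\<forall>q. b q \<noteq> 0 \<longrightarrow> den N2 q" using assms(2) K_set_iff by blast
  have "\<forall>q. hmul a b q \<noteq> 0 \<longrightarrow> den (N1 * N2) q"
  proof (intro allI impI)
    fix q assume "hmul a b q \<noteq> 0"
    then obtain u where u: "a u \<noteq> 0" "b (q - u) \<noteq> 0" using hmul_nonzero_ex by blast
    have "den (N1 * N2) u" using N1 N2 u den_mult by blast
    moreover have "den (N1 * N2) (q - u)" using N1 N2 u den_mult[of N2 "q - u" N1] by (auto simp: mult.commute)
    ultimately show "den (N1 * N2) q" using den_add by fastforce
  qed
  moreover have "N1 * N2 \<ge> 1" using N1 N2 by simp
  moreover have "hmul a b \<in> hahn" using assms by (simp add: K_set_iff hmul_hahn)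
  ultimately show ?thesis unfolding K_set_iff by blast
qed

lemma K_hmono_int: "hmono c (of_int k) \<in> K_set"
  unfolding K_set_iff
proof (intro conjI exI[of _ 1])
  show "hmono c (of_int k) \<in> hahn" by (rule hmono_hahn)
qed (auto simp: hmono_def den_def split: if_splits)

lemma K_hmono_nat: "hmono c (of_nat k) \<in> K_set"
  using K_hmono_int[of c "int k"] by simp

lemma K_hzero: "hzero \<in> K_set"
  unfolding K_set_iff by (rule conjI[OF hzero_hahn], rule exI[of _ 1]) (simp add: hzero_def)

lemma K_hone: "hone \<in> K_set"
proof -
  have "hone = hmono 1 (of_nat 0)" by (simp add: hone_def hmono_def fun_eq_iff)
  then show ?thesis using K_hmono_nat by metis
qed

definition KT :: "'f::comm_ring_1 hahnT set" where
  "KT = {x. Rep_hahnT x \<in> K_set}"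

lemma KT_add: "x \<in> KT \<Longrightarrow> y \<in> KT \<Longrightarrow> x + y \<in> KT"
  by (simp add: KT_def Rep_plus K_hadd)
lemma KT_uminus: "x \<in> KT \<Longrightarrow> - x \<in> KT"
  by (simp add: KT_def Rep_uminus K_hneg)
lemma KT_diff: "x \<in> KT \<Longrightarrow> y \<in> KT \<Longrightarrow> x - y \<in> KT"
  by (simp add: KT_def Rep_minus K_hadd K_hneg)
lemma KT_mult: "x \<in> KT \<Longrightarrow> y \<in> KT \<Longrightarrow> x * y \<in> KT"
  by (simp add: KT_def Rep_times K_hmul)
lemma KT_zero: "0 \<in> KT"
  by (simp add: KT_def Rep_zero K_hzero)
lemma KT_one: "1 \<in> KT"
  by (simp add: KT_def Rep_one K_hone)
lemma KT_pow: "x \<in> KT \<Longrightarrow> x ^ n \<in> KT"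
  by (induction n) (auto simp: KT_one KT_mult)
lemma KT_sum: "(\<And>i. i \<in> I \<Longrightarrow> f i \<in> KT) \<Longrightarrow> sum f I \<in> KT"
  by (induction I rule: infinite_finite_induct) (auto simp: KT_zero KT_add)
lemma KT_mono_nat: "Abs_hahnT (hmono c (of_nat k)) \<in> KT"
  by (simp add: KT_def Rep_Abs hmono_hahn K_hmono_nat)
lemma KT_mono_int: "Abs_hahnT (hmono c (of_int k)) \<in> KT"
  by (simp add: KT_def Rep_Abs hmono_hahn K_hmono_int)

section \<open>Additive polynomials and membership in barK\<close>

definition addp :: "nat \<Rightarrow> 'f::comm_ring_1 hahnT list \<Rightarrow> 'f hahnT \<Rightarrow> 'f hahnT" where
  "addp p as x = (\<Sum>k<length as. as ! k * x ^ (p ^ k))"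

lemma barK_from_addp:
  fixes x :: "'f::comm_ring_1 hahnT"
  assumes p: "p \<ge> 2" and as: "set as \<subseteq> KT" and ne: "as \<noteq> []" and last: "as ! (length as - 1) \<noteq> 0"
    and b: "addp p as x \<in> KT"
  shows "Rep_hahnT x \<in> barK"
proof -
  define L where "L = length as"
  define b where "b = addp p as x"
  define D where "D = p ^ (L - 1) + 1"
  define coef where "coef l = (if l = 0 then - b else 0) + (\<Sum>k<L. if l = p ^ k then as ! k else 0)" for l
  define cs where "cs = map (\<lambda>l. Rep_hahnT (coef l)) [0..<D]"
  have L: "L \<ge> 1" using ne by (cases as) (auto simp: L_def)
  have pk: "p ^ k < D" if "k < L" for k
  proof -
    have "p ^ k \<le> p ^ (L - 1)" using that p by (intro power_increasing) auto
    then show ?thesis by (simp add: D_def)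
  qed
  have pk0: "p ^ k \<noteq> 0" for k using p by simp
  have coefKT: "coef l \<in> KT" for l
    unfolding coef_def using as b
    by (intro KT_add KT_sum) (auto simp: b_def L_def KT_zero KT_uminus)
  have lencs: "length cs = D" by (simp add: cs_def)
  have csl: "cs ! l = Rep_hahnT (coef l)" if "l < D" for l using that by (simp add: cs_def)
  have csK: "set cs \<subseteq> K_set"
    using coefKT by (auto simp: cs_def KT_def)
  have csH: "set cs \<subseteq> hahn" by (auto simp: cs_def)
  have coeftop: "coef (p ^ (L - 1)) = as ! (L - 1)"
  proof -
    have "(\<Sum>k<L. if p ^ (L - 1) = p ^ k then as ! k else 0) = (\<Sum>k<L. if k = L - 1 then as ! k else 0)"
      by (rule sum.cong[OF refl]) (use p in \<open>auto simp: power_inject_exp\<close>)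
    also have "\<dots> = as ! (L - 1)" using L by (simp add: sum.delta)
    finally show ?thesis using p by (simp add: coef_def)
  qed
  have nz: "\<exists>c\<in>set cs. c \<noteq> hzero"
  proof
    show "cs ! (p ^ (L - 1)) \<in> set cs" using pk[of "L - 1"] L by (simp add: lencs)
    show "cs ! (p ^ (L - 1)) \<noteq> hzero"
      using pk[of "L - 1"] L last coeftop by (simp add: csl Rep_eq_zero L_def)
  qed
  have "(\<Sum>l<D. coef l * x ^ l) = - b + (\<Sum>k<L. as ! k * x ^ (p ^ k))"
  proof -
    have "(\<Sum>l<D. coef l * x ^ l) = (\<Sum>l<D. (if l = 0 then - b else 0) * x ^ l) + (\<Sum>l<D. \<Sum>k<L. (if l = p ^ k then as ! k * x ^ l else 0))"
    proof -
      have e: "coef l * x ^ l = (if l = 0 then - b else 0) * x ^ l + (\<Sum>k<L. if l = p ^ k then as ! k * x ^ l else 0)" for l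
      proof -
        have "(\<Sum>k<L. if l = p ^ k then as ! k else 0) * x ^ l = (\<Sum>k<L. if l = p ^ k then as ! k * x ^ l else 0)"
          unfolding sum_distrib_right by (rule sum.cong) auto
        then show ?thesis unfolding coef_def distrib_right by simp
      qed
      show ?thesis unfolding e sum.distrib ..
    qed
    also have "(\<Sum>l<D. (if l = 0 then - b else 0) * x ^ l) = - b"
    proof -
      have "(\<Sum>l<D. (if l = 0 then - b else 0) * x ^ l) = (\<Sum>l<D. if l = 0 then - b * x ^ l else 0)"
        by (rule sum.cong) auto
      also have "\<dots> = - b" using p by (simp add: sum.delta D_def)
      finally show ?thesis .
    qed
    also have "(\<Sum>l<D. \<Sum>k<L. (if l = p ^ k then as ! k * x ^ l else 0)) = (\<Sum>k<L. \<Sum>l<D. (if l = p ^ k then as ! k * x ^ l else 0))"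
      by (rule sum.swap)
    also have "\<dots> = (\<Sum>k<L. as ! k * x ^ (p ^ k))"
      by (rule sum.cong[OF refl]) (use pk in \<open>auto simp: sum.delta'\<close>)
    finally show ?thesis .
  qed
  also have "\<dots> = 0" by (simp add: b_def addp_def L_def)
  finally have zero: "(\<Sum>l<D. coef l * x ^ l) = 0" .
  have "heval cs (Rep_hahnT x) = Rep_hahnT (\<Sum>l<D. coef l * x ^ l)"
    unfolding heval_T[OF csH Rep_hahn] lencs
    by (simp add: csl Rep_hahnT_inverse)
  then have "heval cs (Rep_hahnT x) = hzero" using zero by (simp add: Rep_zero)
  then show ?thesis unfolding barK_def using csK nz by auto
qed

lemma KT_barK:
  assumes "x \<in> KT" shows "Rep_hahnT x \<in> barK"
proof (rule barK_from_addp[of 2 "[1]"])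
  show "addp 2 [1] x \<in> KT" using assms by (simp add: addp_def)
qed (auto simp: KT_one)

section \<open>Frobenius\<close>

lemma of_nat_hahnT_eq0: "(of_nat n :: 'f::comm_ring_1 hahnT) = 0 \<longleftrightarrow> (of_nat n :: 'f) = 0"
proof -
  have "(of_nat n :: 'f hahnT) = 0 \<longleftrightarrow> Rep_hahnT (of_nat n :: 'f hahnT) = hzero"
    by (simp add: Rep_eq_zero)
  also have "\<dots> \<longleftrightarrow> (of_nat n :: 'f) = 0"
    unfolding Rep_of_nat by (auto simp: hmono_def hzero_def fun_eq_iff)
  finally show ?thesis .
qed

lemma CHAR_hahnT: "CHAR('f::comm_ring_1 hahnT) = CHAR('f)"
  by (rule CHAR_eqI) (simp_all add: of_nat_hahnT_eq0 of_nat_eq_0_iff_char_dvd)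

lemma Rep_mono_pow: "Rep_hahnT (Abs_hahnT (hmono c e) ^ k) = hmono (c ^ k) (of_nat k * e)"
proof (induction k)
  case 0
  then show ?case by (simp add: Rep_one hone_def hmono_def fun_eq_iff)
next
  case (Suc k)
  show ?case
    by (simp add: Rep_times Suc Rep_Abs hmono_hahn hmul_hmono_fun)
       (auto simp: hmono_def fun_eq_iff algebra_simps)
qed

lemma pow_upper:
  fixes y :: "'f::comm_ring_1 hahnT"
  assumes "\<And>u. Rep_hahnT y u \<noteq> 0 \<Longrightarrow> u < r"
  shows "Rep_hahnT (y ^ Suc k) u \<noteq> 0 \<Longrightarrow> u < of_nat (Suc k) * r"
proof (induction k arbitrary: u)
  case 0
  then show ?case using assms by simp
next
  case (Suc k)
  have "hmul (Rep_hahnT y) (Rep_hahnT (y ^ Suc k)) u \<noteq> 0" using Suc.prems by (simp add: Rep_times)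
  then obtain v where v: "Rep_hahnT y v \<noteq> 0" "Rep_hahnT (y ^ Suc k) (u - v) \<noteq> 0"
    using hmul_nonzero_ex by blast
  have "v < r" using assms v(1) by blast
  moreover have "u - v < of_nat (Suc k) * r" using Suc.IH v(2) by blast
  ultimately show ?case by (simp add: algebra_simps)
qed

lemma pow_lower:
  fixes y :: "'f::comm_ring_1 hahnT"
  assumes "\<And>u. Rep_hahnT y u \<noteq> 0 \<Longrightarrow> r < u"
  shows "Rep_hahnT (y ^ Suc k) u \<noteq> 0 \<Longrightarrow> of_nat (Suc k) * r < u"
proof (induction k arbitrary: u)
  case 0
  then show ?case using assms by simp
next
  case (Suc k)
  have "hmul (Rep_hahnT y) (Rep_hahnT (y ^ Suc k)) u \<noteq> 0" using Suc.prems by (simp add: Rep_times)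
  then obtain v where v: "Rep_hahnT y v \<noteq> 0" "Rep_hahnT (y ^ Suc k) (u - v) \<noteq> 0"
    using hmul_nonzero_ex by blast
  have "r < v" using assms v(1) by blast
  moreover have "of_nat (Suc k) * r < u - v" using Suc.IH v(2) by blast
  ultimately show ?case by (simp add: algebra_simps)
qed

lemma frob_coeff:
  fixes x :: "'f::comm_ring_1 hahnT"
  assumes pr: "prime p" and ch: "CHAR('f) = p"
  shows "Rep_hahnT (x ^ p) q = (Rep_hahnT x (q / of_nat p)) ^ p"
proof -
  define a where "a = Rep_hahnT x"
  define r where "r = q / of_nat p"
  have p0: "p > 0" using pr prime_gt_0_nat by blast
  have qr: "of_nat p * r = q" using p0 by (simp add: r_def)
  define b where "b = (\<lambda>u. if u < r then a u else 0)"
  define c where "c = (\<lambda>u. if r < u then a u else 0)"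
  have ah: "a \<in> hahn" by (simp add: a_def)
  have bh: "b \<in> hahn" by (rule hahn_subset[OF ah]) (auto simp: b_def split: if_splits)
  have ch': "c \<in> hahn" by (rule hahn_subset[OF ah]) (auto simp: c_def split: if_splits)
  define B where "B = (Abs_hahnT b :: 'f hahnT)"
  define C where "C = (Abs_hahnT c :: 'f hahnT)"
  define M where "M = (Abs_hahnT (hmono (a r) r) :: 'f hahnT)"
  have RB: "Rep_hahnT B = b" by (simp add: B_def Rep_Abs bh)
  have RC: "Rep_hahnT C = c" by (simp add: C_def Rep_Abs ch')
  have RM: "Rep_hahnT M = hmono (a r) r" by (simp add: M_def Rep_Abs hmono_hahn)
  have x: "x = B + M + C"
  proof (rule hahnT_eqI, rule ext)
    fix u
    show "Rep_hahnT x u = Rep_hahnT (B + M + C) u"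
      unfolding Rep_plus RB RC RM hadd_def
      by (cases u r rule: linorder_cases) (auto simp: a_def b_def c_def hmono_def)
  qed
  have pc: "prime CHAR('f hahnT)" using pr ch by (simp add: CHAR_hahnT)
  have pe: "p = CHAR('f hahnT)" using ch by (simp add: CHAR_hahnT)
  have "x ^ p = B ^ p + M ^ p + C ^ p"
    unfolding x using freshmans_dream[OF pc pe] by simp
  moreover have "Rep_hahnT (B ^ p) q = 0"
  proof (rule ccontr)
    assume nz: "Rep_hahnT (B ^ p) q \<noteq> 0"
    obtain k where k: "p = Suc k" using p0 by (cases p) auto
    have nz': "Rep_hahnT (B ^ Suc k) q \<noteq> 0" using nz unfolding k .
    have "q < of_nat (Suc k) * r" by (rule pow_upper[OF _ nz']) (simp add: RB b_def split: if_splits)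
    then show False using qr k by simp
  qed
  moreover have "Rep_hahnT (C ^ p) q = 0"
  proof (rule ccontr)
    assume nz: "Rep_hahnT (C ^ p) q \<noteq> 0"
    obtain k where k: "p = Suc k" using p0 by (cases p) auto
    have nz': "Rep_hahnT (C ^ Suc k) q \<noteq> 0" using nz unfolding k .
    have "of_nat (Suc k) * r < q" by (rule pow_lower[OF _ nz']) (simp add: RC c_def split: if_splits)
    then show False using qr k by simp
  qed
  moreover have "Rep_hahnT (M ^ p) q = a r ^ p"
    unfolding M_def Rep_mono_pow using qr by (simp add: hmono_def)
  ultimately show ?thesis by (simp add: Rep_plus hadd_def a_def r_def)
qed

lemma of_nat_pow_char:
  assumes pr: "prime p" and ch: "CHAR('f::comm_ring_1) = p"
  shows "(of_nat n :: 'f) ^ p = of_nat n"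
proof (induction n)
  case 0
  then show ?case using prime_gt_0_nat[OF pr] by (simp add: power_0_left)
next
  case (Suc n)
  have "(of_nat (Suc n) :: 'f) ^ p = (1 + of_nat n) ^ p" by simp
  also have "\<dots> = 1 ^ p + (of_nat n) ^ p" using pr ch by (intro freshmans_dream) auto
  finally show ?case using Suc by simp
qed

section \<open>The elements s_m and the Artin-Schreier relations\<close>

definition SS :: "nat \<Rightarrow> nat \<Rightarrow> 'f::comm_ring_1 hahnT" where
  "SS p m = (case m of 0 \<Rightarrow> Abs_hahnT (hmono 1 (-1)) | Suc m' \<Rightarrow> Abs_hahnT (s_m p m'))"

lemma Rep_SS0: "Rep_hahnT (SS p 0 :: 'f::comm_ring_1 hahnT) = hmono 1 (-1)"
  by (simp add: SS_def Rep_Abs hmono_hahn)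

lemma Rep_SSSuc: "p \<ge> 2 \<Longrightarrow> Rep_hahnT (SS p (Suc m) :: 'f::comm_ring_1 hahnT) = s_m p m"
  by (simp add: SS_def Rep_Abs sm_hahn)

lemma SS0_KT: "SS p 0 \<in> KT"
proof -
  have "hmono 1 (-1) = hmono 1 (of_int (-1))" by simp
  then show ?thesis unfolding SS_def using KT_mono_int by (metis old.nat.simps(4))
qed

lemma delta0_ne: "p \<ge> 2 \<Longrightarrow> delta p 0 j \<noteq> -1"
  using delta_lower(1)[of p 0 j] by auto

lemma delta0_div: "p \<ge> 2 \<Longrightarrow> delta p 0 j / of_nat p = delta p 0 (Suc j)"
  by (simp add: delta_def)

lemma delta00: "p \<ge> 2 \<Longrightarrow> (-1) / of_nat p = delta p 0 0"
  by (simp add: delta_def)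

lemma frob_SS:
  assumes pr: "prime p" and ch: "CHAR('f::comm_ring_1) = p"
  shows "(SS p (Suc m) :: 'f hahnT) ^ p = SS p (Suc m) + SS p m"
proof -
  have p2: "p \<ge> 2" using pr prime_ge_2_nat by blast
  have p0: "p > 0" using p2 by simp
  show ?thesis
  proof (rule hahnT_eqI, rule ext)
    fix q
    have L: "Rep_hahnT ((SS p (Suc m) :: 'f hahnT) ^ p) q = (s_m p m (q / of_nat p) :: 'f) ^ p"
      using frob_coeff[OF pr ch] Rep_SSSuc[OF p2] by metis
    have RSSm: "Rep_hahnT (SS p m :: 'f hahnT) q = (case m of 0 \<Rightarrow> hmono 1 (-1) q | Suc m' \<Rightarrow> s_m p m' q)"
      by (cases m) (simp_all add: Rep_SS0 Rep_SSSuc[OF p2])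
    have R: "Rep_hahnT ((SS p (Suc m) + SS p m) :: 'f hahnT) q = s_m p m q + Rep_hahnT (SS p m :: 'f hahnT) q"
      by (simp add: Rep_plus hadd_def Rep_SSSuc[OF p2])
    consider "q = -1" | j where "q = delta p 0 j" | "q \<noteq> -1" "\<And>j. q \<noteq> delta p 0 j" by blast
    then show "Rep_hahnT ((SS p (Suc m) :: 'f hahnT) ^ p) q = Rep_hahnT ((SS p (Suc m) + SS p m) :: 'f hahnT) q"
    proof cases
      case 1
      have "q / of_nat p = delta p 0 0" using 1 delta00[OF p2] by simp
      then have "Rep_hahnT ((SS p (Suc m) :: 'f hahnT) ^ p) q = (s_m p m (delta p 0 0) :: 'f) ^ p"
        unfolding L by simp
      also have "\<dots> = of_nat (0 choose m)" by (simp only: sm_at[OF p2] of_nat_pow_char[OF pr ch])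
      finally have "Rep_hahnT ((SS p (Suc m) :: 'f hahnT) ^ p) q = of_nat (0 choose m)" .
      moreover have "(s_m p m q :: 'f) = 0"
        by (rule sm_off) (use 1 delta0_ne[OF p2] in metis)
      moreover have "(s_m p m' q :: 'f) = 0" for m'
        by (rule sm_off) (use 1 delta0_ne[OF p2] in metis)
      ultimately show ?thesis unfolding R RSSm using 1
        by (cases m) (simp_all add: hmono_def)
    next
      case (2 j)
      have "q / of_nat p = delta p 0 (Suc j)" using 2 delta0_div[OF p2] by simp
      then have "Rep_hahnT ((SS p (Suc m) :: 'f hahnT) ^ p) q = (s_m p m (delta p 0 (Suc j)) :: 'f) ^ p"
        unfolding L by simp
      also have "\<dots> = of_nat (Suc j choose m)" by (simp only: sm_at[OF p2] of_nat_pow_char[OF pr ch])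
      finally have "Rep_hahnT ((SS p (Suc m) :: 'f hahnT) ^ p) q = of_nat (Suc j choose m)" .
      moreover have "(s_m p m q :: 'f) = of_nat (j choose m)" unfolding 2 by (rule sm_at[OF p2])
      moreover have "(s_m p m' q :: 'f) = of_nat (j choose m')" for m' unfolding 2 by (rule sm_at[OF p2])
      moreover have "q \<noteq> -1" using 2 delta0_ne[OF p2] by simp
      ultimately show ?thesis unfolding R RSSm
        by (cases m) (simp_all add: hmono_def)
    next
      case 3
      have nq: "q / of_nat p \<noteq> delta p 0 j" for j
      proof
        assume a: "q / of_nat p = delta p 0 j"
        have "q = of_nat p * delta p 0 j" using a p0 by (simp add: field_simps)
        show False
        proof (cases j)
          case 0
          then have "q = -1" using \<open>q = of_nat p * delta p 0 j\<close> p0 by (simp add: delta_def)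
          then show False using 3 by simp
        next
          case (Suc j')
          then have "q = delta p 0 j'" using \<open>q = of_nat p * delta p 0 j\<close> p0 by (simp add: delta_def)
          then show False using 3 by simp
        qed
      qed
      have "Rep_hahnT ((SS p (Suc m) :: 'f hahnT) ^ p) q = 0"
      proof -
        have "(s_m p m (q / of_nat p) :: 'f) = 0" by (rule sm_off) (use nq in blast)
        then show ?thesis unfolding L using p0 by (simp add: power_0_left)
      qed
      moreover have "(s_m p m' q :: 'f) = 0" for m' by (rule sm_off) (use 3 in blast)
      ultimately show ?thesis unfolding R RSSm using 3
        by (cases m) (simp_all add: hmono_def)
    qed
  qed
qed

context
  fixes p :: nat
  assumes pr: "prime p"
begin

lemma frob_add:
  assumes ch: "CHAR('f::comm_ring_1) = p"
  shows "((u::'f hahnT) + v) ^ p = u ^ p + v ^ p"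
  by (rule freshmans_dream) (use pr ch in \<open>auto simp: CHAR_hahnT\<close>)

lemma frob_sum:
  assumes ch: "CHAR('f::comm_ring_1) = p"
  shows "(sum (f :: 'i \<Rightarrow> 'f hahnT) A) ^ p = (\<Sum>i\<in>A. f i ^ p)"
  by (rule freshmans_dream_sum) (use pr ch in \<open>auto simp: CHAR_hahnT\<close>)

lemma frob_neg_pow:
  assumes ch: "CHAR('f::comm_ring_1) = p"
  shows "(- (v::'f hahnT)) ^ (p ^ k) = - (v ^ (p ^ k))"
proof (induction k)
  case 0
  then show ?case by simp
next
  case (Suc k)
  have "(- v) ^ (p ^ Suc k) = ((- v) ^ (p ^ k)) ^ p" by (simp add: power_mult[symmetric] mult.commute)
  also have "\<dots> = (- (v ^ (p ^ k))) ^ p" using Suc by simp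
  also have "\<dots> = - ((v ^ (p ^ k)) ^ p)"
    by (rule minus_power_prime_CHAR) (use pr ch in \<open>auto simp: CHAR_hahnT\<close>)
  also have "\<dots> = - (v ^ (p ^ Suc k))" by (simp add: power_mult[symmetric] mult.commute)
  finally show ?case .
qed

lemma frob_diff_pow:
  assumes ch: "CHAR('f::comm_ring_1) = p"
  shows "((u::'f hahnT) - v) ^ (p ^ k) = u ^ (p ^ k) - v ^ (p ^ k)"
proof -
  have "(u + (- v)) ^ (p ^ k) = u ^ (p ^ k) + (- v) ^ (p ^ k)"
    by (rule freshmans_dream') (use pr ch in \<open>auto simp: CHAR_hahnT\<close>)
  then show ?thesis using frob_neg_pow[OF ch] by simp
qed

lemma addp_neg:
  assumes ch: "CHAR('f::comm_ring_1) = p"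
  shows "addp p as (- (x::'f hahnT)) = - addp p as x"
  unfolding addp_def by (simp add: frob_neg_pow[OF ch] sum_negf)

lemma addp_compose:
  fixes as' :: "'f::comm_ring_1 hahnT list" and b :: "'f hahnT"
  assumes ch: "CHAR('f) = p"
  defines "L \<equiv> length as'"
  defines "as \<equiv> map (\<lambda>k. (if 0 < k then as' ! (k - 1) * b ^ (p ^ (k - 1)) else 0)
                        - (if k < L then as' ! k * b ^ (p ^ (k + 1)) else 0)) [0..<Suc L]"
  shows "addp p as x = addp p as' (b * x ^ p - b ^ p * x)"
proof -
  have lenas: "length as = Suc L" by (simp add: as_def)
  have asat: "as ! k = (if 0 < k then as' ! (k - 1) * b ^ (p ^ (k - 1)) else 0)
                        - (if k < L then as' ! k * b ^ (p ^ (k + 1)) else 0)" if "k < Suc L" for k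
    using that by (simp add: as_def del: upt_Suc)
  have "addp p as x = (\<Sum>k<Suc L. (if 0 < k then as' ! (k - 1) * b ^ (p ^ (k - 1)) * x ^ (p ^ k) else 0))
        - (\<Sum>k<Suc L. (if k < L then as' ! k * b ^ (p ^ (k + 1)) * x ^ (p ^ k) else 0))"
    unfolding addp_def lenas sum_subtractf[symmetric]
    by (rule sum.cong[OF refl]) (auto simp: asat algebra_simps)
  also have "(\<Sum>k<Suc L. (if 0 < k then as' ! (k - 1) * b ^ (p ^ (k - 1)) * x ^ (p ^ k) else 0))
      = (\<Sum>k<L. as' ! k * b ^ (p ^ k) * x ^ (p ^ Suc k))"
    by (simp add: sum.lessThan_Suc_shift del: sum.lessThan_Suc)
  also have "(\<Sum>k<Suc L. (if k < L then as' ! k * b ^ (p ^ (k + 1)) * x ^ (p ^ k) else 0))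
      = (\<Sum>k<L. as' ! k * b ^ (p ^ Suc k) * x ^ (p ^ k))"
    by simp
  also have "(\<Sum>k<L. as' ! k * b ^ (p ^ k) * x ^ (p ^ Suc k)) - (\<Sum>k<L. as' ! k * b ^ (p ^ Suc k) * x ^ (p ^ k))
      = addp p as' (b * x ^ p - b ^ p * x)"
    unfolding addp_def L_def[symmetric] sum_subtractf[symmetric]
  proof (rule sum.cong[OF refl])
    fix k
    have "(b * x ^ p - b ^ p * x) ^ (p ^ k) = (b * x ^ p) ^ (p ^ k) - (b ^ p * x) ^ (p ^ k)"
      by (rule frob_diff_pow[OF ch])
    also have "\<dots> = b ^ (p ^ k) * x ^ (p ^ Suc k) - b ^ (p ^ Suc k) * x ^ (p ^ k)"
      by (simp add: power_mult_distrib power_mult[symmetric] mult.commute)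
    finally have e: "(b * x ^ p - b ^ p * x) ^ (p ^ k) = b ^ (p ^ k) * x ^ (p ^ Suc k) - b ^ (p ^ Suc k) * x ^ (p ^ k)" .
    show "as' ! k * b ^ (p ^ k) * x ^ (p ^ Suc k) - as' ! k * b ^ (p ^ Suc k) * x ^ (p ^ k)
        = as' ! k * (b * x ^ p - b ^ p * x) ^ (p ^ k)"
      unfolding e by (simp add: right_diff_distrib mult.assoc)
  qed
  finally show ?thesis .
qed

lemma elim_step:
  fixes \<beta> :: "nat \<Rightarrow> 'f::comm_ring_1 hahnT" and \<kappa> :: "'f hahnT" and N :: nat
  assumes ch: "CHAR('f) = p"
  defines "b \<equiv> \<beta> N"
  defines "x \<equiv> (\<Sum>m<Suc N. \<beta> m * SS p (Suc m)) + \<kappa>"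
  shows "b * x ^ p - b ^ p * x
       = (\<Sum>m<N. (b * \<beta> m ^ p - b ^ p * \<beta> m + b * \<beta> (Suc m) ^ p) * SS p (Suc m))
         + (b * \<beta> 0 ^ p * SS p 0 + b * \<kappa> ^ p - b ^ p * \<kappa>)"
proof -
  have fr: "(SS p (Suc m) :: 'f hahnT) ^ p = SS p (Suc m) + SS p m" for m
    by (rule frob_SS[OF pr ch])
  define A1 where "A1 = (\<Sum>m<Suc N. \<beta> m ^ p * SS p (Suc m))"
  define A2 where "A2 = (\<Sum>m<Suc N. \<beta> m ^ p * SS p m)"
  define X1 where "X1 = (\<Sum>m<Suc N. \<beta> m * SS p (Suc m))"
  have xp: "x ^ p = A1 + A2 + \<kappa> ^ p"
  proof -
    have "x ^ p = X1 ^ p + \<kappa> ^ p" unfolding x_def X1_def by (rule frob_add[OF ch])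
    also have "X1 ^ p = (\<Sum>m<Suc N. (\<beta> m * SS p (Suc m)) ^ p)" unfolding X1_def by (rule frob_sum[OF ch])
    also have "\<dots> = A1 + A2"
      by (simp add: A1_def A2_def power_mult_distrib fr distrib_left sum.distrib del: sum.lessThan_Suc)
    finally show ?thesis .
  qed
  have A2s: "A2 = \<beta> 0 ^ p * SS p 0 + (\<Sum>m<N. \<beta> (Suc m) ^ p * SS p (Suc m))"
    unfolding A2_def by (simp add: sum.lessThan_Suc_shift del: sum.lessThan_Suc)
  have D: "b * A1 - b ^ p * X1 = (\<Sum>m<N. (b * \<beta> m ^ p - b ^ p * \<beta> m) * SS p (Suc m))"
  proof -
    have "b * A1 - b ^ p * X1 = (\<Sum>m<Suc N. (b * \<beta> m ^ p - b ^ p * \<beta> m) * SS p (Suc m))"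
      unfolding A1_def X1_def sum_distrib_left sum_subtractf[symmetric]
      by (rule sum.cong[OF refl]) (simp add: algebra_simps)
    also have "\<dots> = (\<Sum>m<N. (b * \<beta> m ^ p - b ^ p * \<beta> m) * SS p (Suc m))"
    proof -
      have "b * \<beta> N ^ p - b ^ p * \<beta> N = 0" by (simp add: b_def algebra_simps)
      then show ?thesis by simp
    qed
    finally show ?thesis .
  qed
  have xX: "x = X1 + \<kappa>" by (simp add: x_def X1_def)
  have "b * x ^ p - b ^ p * x = (b * A1 - b ^ p * X1) + b * A2 + (b * \<kappa> ^ p - b ^ p * \<kappa>)"
    unfolding xp by (subst xX) (simp add: algebra_simps)
  also have "\<dots> = (\<Sum>m<N. (b * \<beta> m ^ p - b ^ p * \<beta> m) * SS p (Suc m))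
        + (b * \<beta> 0 ^ p * SS p 0 + (\<Sum>m<N. b * \<beta> (Suc m) ^ p * SS p (Suc m)))
        + (b * \<kappa> ^ p - b ^ p * \<kappa>)"
    unfolding D A2s by (simp add: distrib_left sum_distrib_left mult.assoc)
  also have "\<dots> = (\<Sum>m<N. (b * \<beta> m ^ p - b ^ p * \<beta> m + b * \<beta> (Suc m) ^ p) * SS p (Suc m))
         + (b * \<beta> 0 ^ p * SS p 0 + b * \<kappa> ^ p - b ^ p * \<kappa>)"
  proof -
    have comb: "(\<Sum>m<N. (b * \<beta> m ^ p - b ^ p * \<beta> m + b * \<beta> (Suc m) ^ p) * SS p (Suc m))
      = (\<Sum>m<N. (b * \<beta> m ^ p - b ^ p * \<beta> m) * SS p (Suc m)) + (\<Sum>m<N. b * \<beta> (Suc m) ^ p * SS p (Suc m))"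
      by (simp only: sum.distrib[symmetric] distrib_right)
    show ?thesis unfolding comb by (simp add: algebra_simps)
  qed
  finally show ?thesis .
qed

lemma elim:
  assumes ch: "CHAR('f::idom) = p"
  shows "\<forall>(\<beta> :: nat \<Rightarrow> 'f hahnT) \<kappa>. (\<forall>m. \<beta> m \<in> KT) \<longrightarrow> \<kappa> \<in> KT \<longrightarrow>
     (\<exists>as. set as \<subseteq> KT \<and> as \<noteq> [] \<and> as ! (length as - 1) \<noteq> 0 \<and>
        addp p as ((\<Sum>m<N. \<beta> m * SS p (Suc m)) + \<kappa>) \<in> KT)"
proof (induction N)
  case 0
  show ?case
  proof (intro allI impI)
    fix \<beta> :: "nat \<Rightarrow> 'f hahnT" and \<kappa> :: "'f hahnT" assume "\<forall>m. \<beta> m \<in> KT" "\<kappa> \<in> KT"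
    then show "\<exists>as. set as \<subseteq> KT \<and> as \<noteq> [] \<and> as ! (length as - 1) \<noteq> 0 \<and>
        addp p as ((\<Sum>m<0. \<beta> m * SS p (Suc m)) + \<kappa>) \<in> KT"
      by (intro exI[of _ "[1]"]) (simp add: KT_one addp_def)
  qed
next
  case (Suc N)
  show ?case
  proof (intro allI impI)
    fix \<beta> :: "nat \<Rightarrow> 'f hahnT" and \<kappa> :: "'f hahnT" assume \<beta>: "\<forall>m. \<beta> m \<in> KT" and \<kappa>: "\<kappa> \<in> KT"
    define x where "x = (\<Sum>m<Suc N. \<beta> m * SS p (Suc m)) + \<kappa>"
    define b where "b = \<beta> N"
    show "\<exists>as. set as \<subseteq> KT \<and> as \<noteq> [] \<and> as ! (length as - 1) \<noteq> 0 \<and> addp p as x \<in> KT"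
    proof (cases "b = 0")
      case True
      then have "x = (\<Sum>m<N. \<beta> m * SS p (Suc m)) + \<kappa>" by (simp add: x_def b_def)
      then show ?thesis using Suc.IH \<beta> \<kappa> by simp
    next
      case False
      define \<gamma> where "\<gamma> m = b * \<beta> m ^ p - b ^ p * \<beta> m + b * \<beta> (Suc m) ^ p" for m
      define \<kappa>' where "\<kappa>' = b * \<beta> 0 ^ p * SS p 0 + b * \<kappa> ^ p - b ^ p * \<kappa>"
      have bK: "b \<in> KT" using \<beta> by (simp add: b_def)
      have \<gamma>K: "\<forall>m. \<gamma> m \<in> KT" using \<beta> bK
        by (auto simp: \<gamma>_def intro!: KT_add KT_diff KT_mult KT_pow)
      have \<kappa>'K: "\<kappa>' \<in> KT" using \<beta> bK \<kappa> SS0_KT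
        by (auto simp: \<kappa>'_def intro!: KT_add KT_diff KT_mult KT_pow)
      have y: "b * x ^ p - b ^ p * x = (\<Sum>m<N. \<gamma> m * SS p (Suc m)) + \<kappa>'"
        unfolding x_def b_def \<gamma>_def \<kappa>'_def by (rule elim_step[OF ch])
      obtain as' where as': "set as' \<subseteq> KT" "as' \<noteq> []" "as' ! (length as' - 1) \<noteq> 0"
        "addp p as' ((\<Sum>m<N. \<gamma> m * SS p (Suc m)) + \<kappa>') \<in> KT"
        using Suc.IH \<gamma>K \<kappa>'K by blast
      define L where "L = length as'"
      define as where "as = map (\<lambda>k. (if 0 < k then as' ! (k - 1) * b ^ (p ^ (k - 1)) else 0)
                        - (if k < L then as' ! k * b ^ (p ^ (k + 1)) else 0)) [0..<Suc L]"
      have comp: "addp p as x = addp p as' (b * x ^ p - b ^ p * x)"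
        unfolding as_def L_def by (rule addp_compose[OF ch])
      have L1: "L \<ge> 1" using as'(2) by (cases as') (auto simp: L_def)
      have asK: "set as \<subseteq> KT"
      proof
        fix c assume "c \<in> set as"
        then obtain k where k: "k < Suc L" "c = (if 0 < k then as' ! (k - 1) * b ^ (p ^ (k - 1)) else 0)
                        - (if k < L then as' ! k * b ^ (p ^ (k + 1)) else 0)"
          by (auto simp: as_def simp del: upt_Suc)
        have "as' ! (k - 1) \<in> KT" if "0 < k" using k that as'(1) by (auto simp: L_def)
        moreover have "as' ! k \<in> KT" if "k < L" using that as'(1) by (auto simp: L_def)
        ultimately show "c \<in> KT" unfolding k(2)
          by (auto intro!: KT_diff KT_mult KT_pow KT_uminus bK simp: KT_zero)
      qed
      have lenas: "length as = Suc L" by (simp add: as_def)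
      have last: "as ! (length as - 1) \<noteq> 0"
      proof -
        have "as ! L = as' ! (L - 1) * b ^ (p ^ (L - 1))"
          using L1 by (simp add: as_def nth_append del: upt_Suc)
        moreover have "as' ! (L - 1) \<noteq> 0" using as'(3) by (simp add: L_def)
        moreover have "b ^ (p ^ (L - 1)) \<noteq> 0" using False by simp
        ultimately show ?thesis by (simp add: lenas)
      qed
      show ?thesis
      proof (intro exI[of _ as] conjI)
        show "set as \<subseteq> KT" by (rule asK)
        show "as \<noteq> []" using lenas by auto
        show "as ! (length as - 1) \<noteq> 0" by (rule last)
        show "addp p as x \<in> KT" unfolding comp y by (rule as'(4))
      qed
    qed
  qed
qed

end

section \<open>Membership of the truncations in barK\<close>

lemma strunc_NN:
  assumes p: "p \<ge> 2"
  shows "(s_trunc p N N :: 'f::comm_ring_1 hser) = Rep_hahnT (\<Sum>m<N. Abs_hahnT (hmono 1 (of_nat m)) * SS p (Suc m))"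
proof (rule ext)
  fix q
  have "hsum (\<lambda>j. hmono (of_nat (j choose N)) (- 1 / of_nat p ^ (j + 1))) {N..<N} = (hzero :: 'f hser)"
    by (simp add: hsum_finite hzero_def fun_eq_iff)
  moreover have "hmul (hmono 1 (of_nat N)) (hzero :: 'f hser) = hzero"
    by (simp add: hmul_hmono1 hzero_def fun_eq_iff)
  ultimately have "(s_trunc p N N :: 'f hser) q = hsum (\<lambda>m. hmul (hmono 1 (of_nat m)) (s_m p m)) {..<N} q"
    unfolding s_trunc_def by (simp add: hadd_def hzero_def)
  also have "\<dots> = (\<Sum>m<N. hmul (hmono 1 (of_nat m)) (s_m p m) q)"
    by (simp add: hsum_finite)
  also have "\<dots> = Rep_hahnT (\<Sum>m<N. Abs_hahnT (hmono 1 (of_nat m)) * SS p (Suc m) :: 'f hahnT) q"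
    by (simp add: Rep_sum Rep_times Rep_Abs hmono_hahn Rep_SSSuc[OF p])
  finally show "(s_trunc p N N :: 'f hser) q = Rep_hahnT (\<Sum>m<N. Abs_hahnT (hmono 1 (of_nat m)) * SS p (Suc m) :: 'f hahnT) q" .
qed

lemma strunc_barK:
  assumes pr: "prime p" and ch: "CHAR('f::idom) = p"
  shows "(s_trunc p N N :: 'f hser) \<in> barK" "hneg (s_trunc p N N :: 'f hser) \<in> barK"
proof -
  have p: "p \<ge> 2" using pr prime_ge_2_nat by blast
  define X where "X = (\<Sum>m<N. Abs_hahnT (hmono 1 (of_nat m)) * SS p (Suc m) :: 'f hahnT)"
  have RX: "Rep_hahnT X = s_trunc p N N" unfolding X_def by (rule strunc_NN[OF p, symmetric])
  have bK: "\<forall>m. (Abs_hahnT (hmono 1 (of_nat m)) :: 'f hahnT) \<in> KT" using KT_mono_nat by blast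
  obtain as where as: "set as \<subseteq> KT" "as \<noteq> []" "as ! (length as - 1) \<noteq> 0"
    "addp p as ((\<Sum>m<N. Abs_hahnT (hmono 1 (of_nat m)) * SS p (Suc m)) + 0 :: 'f hahnT) \<in> KT"
    using spec[OF spec[OF elim[OF pr ch, of N], of "\<lambda>m. Abs_hahnT (hmono 1 (of_nat m))"], of "0 :: 'f hahnT"] bK KT_zero by blast
  have aX: "addp p as X \<in> KT" using as(4) by (simp add: X_def)
  show "(s_trunc p N N :: 'f hser) \<in> barK"
    using barK_from_addp[OF p as(1-3) aX] RX by simp
  have aX': "addp p as (- X) \<in> KT" using aX by (simp add: addp_neg[OF pr ch] KT_uminus)
  show "hneg (s_trunc p N N :: 'f hser) \<in> barK"
    using barK_from_addp[OF p as(1-3) aX'] RX by (simp add: Rep_uminus)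
qed

lemma hone_barK: "(hone :: 'f::comm_ring_1 hser) \<in> barK"
  using KT_barK[OF KT_one] by (simp add: Rep_one)

theorem lemma2p4:
  fixes p :: nat
    and F :: "'f::alg_closed_field itself"
  assumes "prime p"
    and "CHAR('f) = p"
    and "\<forall>a::'f. \<exists>q::'f poly. q \<noteq> 0 \<and> (\<forall>k. coeff q k \<in> range of_nat) \<and> poly q a = 0"
  shows "(\<forall>(n, i)\<in>S_set p. \<forall>(m, j)\<in>S_set p.
            v_ni p n i [hneg (s_trunc p m j :: 'f hser), hone]
              = ereal (real_of_rat (min (delta p n i) (delta p m j))))
       \<and> (\<forall>(n, i)\<in>S_set p. val_less (v_ni p n i :: 'f hser list \<Rightarrow> ereal) (v_s p))"
proof -
  have pr: "prime p" and ch: "CHAR('f) = p" using assms by auto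
  have p: "p \<ge> 2" using pr prime_ge_2_nat by blast
  have P1: "\<forall>(n, i)\<in>S_set p. \<forall>(m, j)\<in>S_set p.
            v_ni p n i [hneg (s_trunc p m j :: 'f hser), hone]
              = ereal (real_of_rat (min (delta p n i) (delta p m j)))"
    using part1[OF p ch] by blast
  have P2: "val_less (v_ni p n i :: 'f hser list \<Rightarrow> ereal) (v_s p)" if ni: "(n, i) \<in> S_set p" for n i
  proof -
    have le: "val_le (v_ni p n i :: 'f hser list \<Rightarrow> ereal) (v_s p)"
      unfolding val_le_def barK_polys_def
    proof (intro ballI)
      fix cs :: "'f hser list" assume "cs \<in> {cs. set cs \<subseteq> barK}"
      then have "set cs \<subseteq> hahn" by (auto simp: barK_def)
      then show "v_ni p n i cs \<le> v_s p cs" by (rule vni_le_vs[OF p])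
    qed
    define st where "st = (s_trunc p (Suc n) (Suc n) :: 'f hser)"
    define cs where "cs = [hneg st, hone]"
    have h1: "hneg st \<in> barK" unfolding st_def by (rule strunc_barK(2)[OF pr ch])
    have h2: "(hone :: 'f hser) \<in> barK" by (rule hone_barK)
    have csB: "cs \<in> barK_polys"
      unfolding barK_polys_def cs_def mem_Collect_eq set_simps insert_subset using h1 h2 by blast
    have S1: "(Suc n, Suc n) \<in> S_set p"
      using p by (simp add: S_set_def)
    have dl: "delta p n i < delta p (Suc n) (Suc n)" using delta_less[OF p] by simp
    have v1: "v_ni p n i cs = ereal (real_of_rat (delta p n i))"
      using part1[OF p ch ni S1] dl by (simp add: cs_def st_def min_def)
    have sth: "st \<in> hahn" by (simp add: st_def strunc_hahn[OF p])
    have "heval cs (s_ser p) = Rep_hahnT (Abs_hahnT (s_ser p) - Abs_hahnT st)"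
    proof -
      have csh: "set cs \<subseteq> hahn" using sth by (simp add: cs_def hneg_hahn hone_hahn)
      have "Abs_hahnT (hneg st) = - Abs_hahnT st"
        by (rule hahnT_eqI) (simp add: Rep_uminus Rep_Abs sth hneg_hahn)
      moreover have "Abs_hahnT hone = (1 :: 'f hahnT)"
        by (rule hahnT_eqI) (simp add: Rep_one Rep_Abs hone_hahn)
      ultimately show ?thesis
        unfolding heval_T[OF csh sser_hahn[OF p]] by (simp add: cs_def numeral_2_eq_2)
    qed
    then have "v_s p cs = vT (Abs_hahnT (s_ser p) - Abs_hahnT st :: 'f hahnT)"
      by (simp add: v_s_def vT_def)
    then have "ereal (real_of_rat (delta p (Suc n) (Suc n))) \<le> v_s p cs"
      using vT_S_minus_C[OF p, of "Suc n" "Suc n"] by (simp add: st_def)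
    moreover have "ereal (real_of_rat (delta p n i)) < ereal (real_of_rat (delta p (Suc n) (Suc n)))"
      using dl by (simp add: of_rat_less)
    ultimately have "v_ni p n i cs < v_s p cs" unfolding v1 by (meson less_le_trans)
    then have "v_ni p n i cs \<noteq> v_s p cs" by simp
    then show ?thesis unfolding val_less_def using le csB by blast
  qed
  show ?thesis using P1 P2 by blast
qed


end
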